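(* Let $r\ge 2$, $n\ge1$ and $\underline m=(m_0,m_1,m_2,m_3)\in\mathbb N^4$ with $\gcd(m_3,r)=n$ and $\gcd(m_i,r)=1$ for $i\ne3$. Then the adjacency matrix of $L_7^{r;\underline m}$ (vertices ordered $v_0^0,v_1^0,v_2^0,v_3^0,\dots,v_3^{n-1}$) is $$\begin{pmatrix}1&r&\frac{r(r+1)}2&x_0&\cdots&x_{n-1}\\0&1&r&y_0&\cdots&y_{n-1}\\0&0&1&\frac rn&\cdots&\frac rn\\0&0&0&&&\\ \vdots&\vdots&\vdots&&I_n&\\0&0&0&&&\end{pmatrix}$$ where $y_0=\frac{r(r+n)}{2n}$; for $1\le t\le n-1$, $y_t\equiv\frac{r(r-n)}{2n}+a_2t\frac rn\pmod r$; and for $0\le t\le n-1$, $x_t-X_t-\frac rn\big(a_1t+a_2t-1\big)\in r\mathbb Z$, where $$X_t=-m_2^{-1}m_1\frac{r(r-2)(r-1)}{3n}+\sum_{l=1}^{r-2}l\,\frac{r(1-k_l)}{n}+\sum_{h=0}^{n-1}\sum_{l\in\Lambda_h}\frac{lh}{n}-\sum_{h=s_t+1}^{n-1}\sum_{l\in\Lambda_h}l .$$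
   Context: Let $r\ge 2$ and $N\ge 0$ be integers and $\underline m=(m_0,\dots,m_N)\in\mathbb N^{N+1}$. The skew product graph $L_{2N+1}\times_{\underline m}\mathbb Z_r$ is the directed graph with vertices $(v_i,k)$, $0\le i\le N$, $k\in\mathbb Z_r=\{0,1,\dots,r-1\}$, and edges $(e_{ij},k)$ for $0\le i\le j\le N$, $k\in\mathbb Z_r$, the edge $(e_{ij},k)$ having source $(v_i,k-m_i \bmod r)$ and range $(v_j,k)$. The vertices $(v_i,k)$, $k\in\mathbb Z_r$, form level $i$. A vertex $(v_l,k)$ is called distinguished if $0\le k<\gcd(m_l,r)$. For distinguished vertices $(v_i,s),(v_j,t)$, an admissible path from $(v_i,s)$ to $(v_j,t)$ is a finite path of positive length in the skew product graph with source $(v_i,s)$ and range $(v_j,t)$ none of whose vertices other than its source and range is distinguished. The graph $L^{r;\underline m}_{2N+1}$ has vertices $v_i^b$ ($0\le i\le N$, $0\le b<\gcd(m_i,r)$) and, for all $i,j,s,t$, exactly as many edges from $v_i^s$ to $v_j^t$ as there are admissible paths from $(v_i,s)$ to $(v_j,t)$. Its adjacency matrix has $(v,w)$ entry equal to the number of edges from $v$ to $w$. Here $N=3$. Notation: $m_2^{-1}\in\{0,\dots,r-1\}$ is the inverse of $m_2$ modulo $r$; $a_1,a_2\in\{0,\dots,n-1\}$ are the inverses of $m_1,m_2$ modulo $n$; for $0\le t\le n-1$, $s_t\in\{0,\dots,n-1\}$ satisfies $s_t\equiv a_2t-1\pmod n$; for $1\le l\le r-2$, $k_l\in\mathbb Z$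 is the integer with $0<m_2^{-1}m_1(l+1)+rk_l<r$; for $0\le h\le n-1$, $\Lambda_h=\{l\in\{1,\dots,r-2\}: l\equiv m_2a_1h-1\pmod n\}$. *)

theory Defs
  imports Complex_Main "HOL-Number_Theory.Cong"
begin

(* Skew product graph L_{2N+1} \<times>_m Z_r.
   Vertex (v_i,k) is the pair (i,k); edge (e_ij,k) is the triple (i,j,k). *)

definition sp_edges :: "nat \<Rightarrow> nat \<Rightarrow> (nat \<times> nat \<times> nat) set" where
  "sp_edges N r = {(i,j,k). i \<le> j \<and> j \<le> N \<and> k < r}"

definition sp_src :: "nat \<Rightarrow> (nat \<Rightarrow> nat) \<Rightarrow> nat \<times> nat \<times> nat \<Rightarrow> nat \<times> nat" where
  "sp_src r m e = (case e of (i,j,k) \<Rightarrow> (i, nat ((int k - int (m i)) mod int r)))"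

definition sp_rng :: "nat \<times> nat \<times> nat \<Rightarrow> nat \<times> nat" where
  "sp_rng e = (case e of (i,j,k) \<Rightarrow> (j,k))"

definition distinguished :: "nat \<Rightarrow> (nat \<Rightarrow> nat) \<Rightarrow> nat \<times> nat \<Rightarrow> bool" where
  "distinguished r m v = (case v of (l,k) \<Rightarrow> k < gcd (m l) r)"

definition admissible_paths ::
  "nat \<Rightarrow> nat \<Rightarrow> (nat \<Rightarrow> nat) \<Rightarrow> nat \<times> nat \<Rightarrow> nat \<times> nat \<Rightarrow> (nat \<times> nat \<times> nat) list set" where
  "admissible_paths N r m v w =
     {p. p \<noteq> [] \<and> set p \<subseteq> sp_edges N r
        \<and> (\<forall>q. Suc q < length p \<longrightarrow> sp_rng (p ! q) = sp_src r m (p ! Suc q))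
        \<and> sp_src r m (hd p) = v \<and> sp_rng (last p) = w
        \<and> (\<forall>q. Suc q < length p \<longrightarrow> \<not> distinguished r m (sp_rng (p ! q)))}"

definition L_adj :: "nat \<Rightarrow> nat \<Rightarrow> (nat \<Rightarrow> nat) \<Rightarrow> nat \<times> nat \<Rightarrow> nat \<times> nat \<Rightarrow> nat" where
  "L_adj N r m v w = card (admissible_paths N r m v w)"

definition k_idx :: "nat \<Rightarrow> nat \<Rightarrow> nat \<Rightarrow> nat \<Rightarrow> int" where
  "k_idx r m1 m2inv l =
     (THE k::int. 0 < int m2inv * int m1 * (int l + 1) + int r * k
                \<and> int m2inv * int m1 * (int l + 1) + int r * k < int r)"

definition Lambda :: "nat \<Rightarrow> nat \<Rightarrow> nat \<Rightarrow> nat \<Rightarrow> nat \<Rightarrow> nat set" where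
  "Lambda r n m2 a1 h = {l \<in> {1..r-2}. [int l = int m2 * int a1 * int h - 1] (mod int n)}"

definition s_idx :: "nat \<Rightarrow> nat \<Rightarrow> nat \<Rightarrow> nat" where
  "s_idx n a2 t = nat ((int a2 * int t - 1) mod int n)"

definition X_val :: "nat \<Rightarrow> nat \<Rightarrow> (nat \<Rightarrow> nat) \<Rightarrow> nat \<Rightarrow> nat \<Rightarrow> nat \<Rightarrow> nat \<Rightarrow> rat" where
  "X_val r n m m2inv a1 a2 t =
     - of_nat m2inv * of_nat (m 1) * of_nat r * (of_nat r - 2) * (of_nat r - 1) / (3 * of_nat n)
     + (\<Sum>l\<in>{1..r-2}. of_nat l * (of_nat r * (1 - of_int (k_idx r (m 1) m2inv l)) / of_nat n))
     + (\<Sum>h\<in>{0..n-1}. \<Sum>l\<in>Lambda r n (m 2) a1 h. of_nat l * of_nat h / of_nat n)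
     - (\<Sum>h\<in>{s_idx n a2 t + 1..n-1}. \<Sum>l\<in>Lambda r n (m 2) a1 h. of_nat l)"

end

theory Submission
  imports Defs
begin

lemma src_iff:
  assumes "k < r" "s < r"
  shows "(nat ((int k - int a) mod int r) = s) \<longleftrightarrow> k = (s + a) mod r"
proof -
  have r: "int r > 0" using assms by simp
  have "(nat ((int k - int a) mod int r) = s) \<longleftrightarrow> (int k - int a) mod int r = int s mod int r"
    using r assms by auto
  also have "\<dots> \<longleftrightarrow> int k mod int r = (int s + int a) mod int r"
    by (simp add: mod_eq_dvd_iff algebra_simps)
  also have "\<dots> \<longleftrightarrow> k = (s + a) mod r"
    using assms by (metis mod_less of_nat_add of_nat_eq_iff zmod_int)
  finally show ?thesis .
qed

locale gr = fixes r :: nat and m :: "nat \<Rightarrow> nat" assumes rpos: "0 < r"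
begin

abbreviation "adm \<equiv> admissible_paths 3 r m"
abbreviation "dis \<equiv> distinguished r m"
definition nxt :: "nat \<Rightarrow> nat \<Rightarrow> nat" where "nxt i s = (s + m i) mod r"

lemma edge_src_iff:
  assumes "s < r"
  shows "(e \<in> sp_edges 3 r \<and> sp_src r m e = (i,s)) \<longleftrightarrow> (\<exists>j. i \<le> j \<and> j \<le> 3 \<and> e = (i,j,nxt i s))"
proof (cases e)
  case (fields i' j k)
  have nx: "nxt i s < r" unfolding nxt_def using rpos by simp
  show ?thesis
  proof
    assume h: "e \<in> sp_edges 3 r \<and> sp_src r m e = (i,s)"
    then have "i' = i" "k < r" "i' \<le> j" "j \<le> 3" "nat ((int k - int (m i)) mod int r) = s"
      using fields by (auto simp: sp_edges_def sp_src_def)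
    then have "k = nxt i s" using src_iff assms unfolding nxt_def by blast
    then show "\<exists>j. i \<le> j \<and> j \<le> 3 \<and> e = (i,j,nxt i s)" using fields \<open>i' = i\<close> \<open>i' \<le> j\<close> \<open>j \<le> 3\<close> by auto
  next
    assume "\<exists>j. i \<le> j \<and> j \<le> 3 \<and> e = (i,j,nxt i s)"
    then obtain j' where h: "i \<le> j'" "j' \<le> 3" "e = (i,j',nxt i s)" by blast
    have "nat ((int (nxt i s) - int (m i)) mod int r) = s" using src_iff[OF nx assms] unfolding nxt_def by blast
    then show "e \<in> sp_edges 3 r \<and> sp_src r m e = (i,s)" using h nx by (auto simp: sp_edges_def sp_src_def)
  qed
qed

definition Aset where
  "Aset i s w j = (if (j, nxt i s) = w then {[(i,j,nxt i s)]} else {}) \<union>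
     (if dis (j, nxt i s) then {} else Cons (i,j,nxt i s) ` adm (j, nxt i s) w)"

lemma adm_decomp:
  assumes "s < r"
  shows "adm (i,s) w = (\<Union>j\<in>{i..3}. Aset i s w j)"
proof
  show "adm (i,s) w \<subseteq> (\<Union>j\<in>{i..3}. Aset i s w j)"
  proof
    fix p assume p: "p \<in> adm (i,s) w"
    then obtain e p' where pe: "p = e # p'" unfolding admissible_paths_def by (cases p) auto
    have P: "set p \<subseteq> sp_edges 3 r"
      "\<forall>q. Suc q < length p \<longrightarrow> sp_rng (p ! q) = sp_src r m (p ! Suc q)"
      "sp_src r m (hd p) = (i,s)" "sp_rng (last p) = w"
      "\<forall>q. Suc q < length p \<longrightarrow> \<not> dis (sp_rng (p ! q))"
      using p unfolding admissible_paths_def by auto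
    have "e \<in> sp_edges 3 r \<and> sp_src r m e = (i,s)" using P pe by auto
    then obtain j where j: "i \<le> j" "j \<le> 3" "e = (i,j,nxt i s)" using edge_src_iff assms by blast
    have "p \<in> Aset i s w j"
    proof (cases "p' = []")
      case True
      then have "(j, nxt i s) = w" using P(4) pe j by (simp add: sp_rng_def)
      then show ?thesis using True pe j unfolding Aset_def by auto
    next
      case False
      have nd: "\<not> dis (j, nxt i s)" using P(5)[rule_format, of 0] False pe j by (simp add: sp_rng_def)
      have "p' \<in> adm (j, nxt i s) w"
        unfolding admissible_paths_def
      proof (intro CollectI conjI allI impI)
        show "p' \<noteq> []" by fact
        show "set p' \<subseteq> sp_edges 3 r" using P(1) pe by auto
        fix q assume "Suc q < length p'"
        then show "sp_rng (p' ! q) = sp_src r m (p' ! Suc q)"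
          using P(2)[rule_format, of "Suc q"] pe by simp
      next
        fix q assume "Suc q < length p'"
        then show "\<not> dis (sp_rng (p' ! q))"
          using P(5)[rule_format, of "Suc q"] pe by simp
      next
        have "sp_rng (p ! 0) = sp_src r m (p ! Suc 0)" using P(2)[rule_format, of 0] pe False by simp
        then show "sp_src r m (hd p') = (j, nxt i s)" using pe j False by (simp add: sp_rng_def hd_conv_nth)
      next
        show "sp_rng (last p') = w" using P(4) pe False by simp
      qed
      then show ?thesis using nd pe j unfolding Aset_def by auto
    qed
    then show "p \<in> (\<Union>j\<in>{i..3}. Aset i s w j)" using j by auto
  qed
next
  show "(\<Union>j\<in>{i..3}. Aset i s w j) \<subseteq> adm (i,s) w"
  proof
    fix p assume "p \<in> (\<Union>j\<in>{i..3}. Aset i s w j)"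
    then obtain j where j: "i \<le> j" "j \<le> 3" and pA: "p \<in> Aset i s w j" by auto
    have e: "(i,j,nxt i s) \<in> sp_edges 3 r" "sp_src r m (i,j,nxt i s) = (i,s)"
      using edge_src_iff[OF assms, of "(i,j,nxt i s)" i] j by auto
    show "p \<in> adm (i,s) w"
    proof (cases "p = [(i,j,nxt i s)]")
      case True
      have "[] \<notin> adm (j, nxt i s) w" by (simp add: admissible_paths_def)
      then have "(j, nxt i s) = w" using pA True unfolding Aset_def by (auto split: if_splits)
      then show ?thesis using True e unfolding admissible_paths_def by (auto simp: sp_rng_def)
    next
      case False
      then obtain p' where pp: "p = (i,j,nxt i s) # p'" and nd: "\<not> dis (j, nxt i s)"
        and p': "p' \<in> adm (j, nxt i s) w"
        using pA unfolding Aset_def by (auto split: if_splits)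
      have P: "p' \<noteq> []" "set p' \<subseteq> sp_edges 3 r"
        "\<forall>q. Suc q < length p' \<longrightarrow> sp_rng (p' ! q) = sp_src r m (p' ! Suc q)"
        "sp_src r m (hd p') = (j, nxt i s)" "sp_rng (last p') = w"
        "\<forall>q. Suc q < length p' \<longrightarrow> \<not> dis (sp_rng (p' ! q))"
        using p' unfolding admissible_paths_def by auto
      show ?thesis unfolding admissible_paths_def
      proof (intro CollectI conjI allI impI)
        show "p \<noteq> []" using pp by simp
        show "set p \<subseteq> sp_edges 3 r" using pp P e by auto
        show "sp_src r m (hd p) = (i,s)" using pp e by simp
        show "sp_rng (last p) = w" using pp P by simp
      next
        fix q assume q: "Suc q < length p"
        show "sp_rng (p ! q) = sp_src r m (p ! Suc q)"
        proof (cases q)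
          case 0 then show ?thesis using pp P(1,4) by (simp add: sp_rng_def hd_conv_nth)
        next
          case (Suc q') then show ?thesis using pp P(3) q by simp
        qed
      next
        fix q assume q: "Suc q < length p"
        show "\<not> dis (sp_rng (p ! q))"
        proof (cases q)
          case 0 then show ?thesis using pp nd by (simp add: sp_rng_def)
        next
          case (Suc q') then show ?thesis using pp P(6) q by simp
        qed
      qed
    qed
  qed
qed

lemma adm_empty:
  assumes "\<not> s < r" shows "adm (i,s) w = {}"
proof -
  { fix p assume p: "p \<in> adm (i,s) w"
    then have "sp_src r m (hd p) = (i,s)" unfolding admissible_paths_def by auto
    moreover have "snd (sp_src r m (hd p)) < r"
      using rpos by (cases "hd p") (auto simp: sp_src_def nat_less_iff)
    ultimately have False using assms by simp }
  then show ?thesis by blast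
qed

lemma exq:
  fixes a k :: nat
  shows "\<exists>q>0. (k + q * a) mod r < gcd a r"
proof (cases "a = 0")
  case True
  then show ?thesis using rpos by (intro exI[of _ 1]) auto
next
  case False
  define g where "g = gcd a r"
  obtain x y where xy: "a * x = r * y + g" using bezout_nat[OF False, of r] unfolding g_def by blast
  define c where "c = k div g"
  have gpos: "0 < g" unfolding g_def using rpos by simp
  have gr: "g \<le> r" unfolding g_def using rpos by (simp add: gcd_le2_nat)
  obtain r' where r': "r = Suc r'" using rpos by (cases r) auto
  define q where "q = x * c * r' + r"
  have k: "k = k mod g + g * c" unfolding c_def by simp
  have "k + q * a = k mod g + g * c + c * r' * (a * x) + r * a"
    unfolding q_def using k by (simp add: algebra_simps)
  also have "\<dots> = k mod g + r * (c * r' * y + c * g + a)"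
    unfolding xy r' by (simp add: algebra_simps)
  finally have "(k + q * a) mod r = (k mod g) mod r" by simp
  also have "\<dots> = k mod g" using gpos gr by (meson mod_less mod_less_divisor order_less_le_trans)
  finally have "(k + q * a) mod r < g" using gpos by simp
  moreover have "0 < q" unfolding q_def using rpos by simp
  ultimately show ?thesis unfolding g_def by blast
qed

definition D :: "nat \<Rightarrow> nat \<Rightarrow> nat" where
  "D l k = (LEAST q. 0 < q \<and> dis (l, (k + q * m l) mod r))"

lemma D_prop: "0 < D l k \<and> dis (l, (k + D l k * m l) mod r)"
proof -
  have "\<exists>q. 0 < q \<and> dis (l, (k + q * m l) mod r)"
    using exq[of k "m l"] by (auto simp: distinguished_def)
  then show ?thesis unfolding D_def by (rule LeastI_ex)
qed

lemma D_next:
  assumes "\<not> dis (l, nxt l k)"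
  shows "D l (nxt l k) < D l k"
proof -
  define d where "d = D l k"
  have d: "0 < d" "dis (l, (k + d * m l) mod r)" using D_prop unfolding d_def by auto
  have "d \<noteq> 1" using d assms unfolding nxt_def by auto
  then have d1: "0 < d - 1" using d by simp
  have "(nxt l k + (d - 1) * m l) mod r = (k + d * m l) mod r"
  proof -
    have "(nxt l k + (d - 1) * m l) mod r = (k + m l + (d - 1) * m l) mod r"
      unfolding nxt_def by (simp add: mod_add_left_eq)
    also have "k + m l + (d - 1) * m l = k + d * m l" using d(1)
      by (cases d) (auto simp: algebra_simps)
    finally show ?thesis .
  qed
  then have "dis (l, (nxt l k + (d - 1) * m l) mod r)" using d by simp
  then have "D l (nxt l k) \<le> d - 1" unfolding D_def using d1 by (intro Least_le) auto
  then show ?thesis using d1 unfolding d_def by simp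
qed

lemma orbit_induct:
  assumes "\<And>k. (\<not> dis (l, nxt l k) \<Longrightarrow> P (nxt l k)) \<Longrightarrow> P k"
  shows "P k"
proof (induction k rule: measure_induct_rule[of "D l"])
  case (less k)
  show ?case by (rule assms) (use less D_next in blast)
qed

lemma adm_finite: "finite (adm v w)"
proof (induction v rule: wf_induct[OF wf_measures[of "[\<lambda>(i,s). 3 - i, \<lambda>(i,s). D i s]"]])
  case (1 v)
  obtain i s where v: "v = (i,s)" by (cases v)
  show ?case
  proof (cases "s < r")
    case False then show ?thesis using adm_empty v by simp
  next
    case True
    have "finite (Aset i s w j)" if j: "j \<in> {i..3}" for j
    proof (cases "dis (j, nxt i s)")
      case True then show ?thesis unfolding Aset_def by simp
    next
      case False
      have "((j, nxt i s), v) \<in> measures [\<lambda>(i,s). 3 - i, \<lambda>(i,s). D i s]"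
      proof (cases "j = i")
        case True then show ?thesis using D_next[of i s] False v by (simp add: in_measures)
      next
        case False then have "3 - j < 3 - i" using j by auto
        then show ?thesis using v by (simp add: in_measures)
      qed
      then have "finite (adm (j, nxt i s) w)" using 1 by blast
      then show ?thesis unfolding Aset_def by simp
    qed
    then show ?thesis using adm_decomp[OF True] v by simp
  qed
qed

lemma card_rec:
  assumes "s < r"
  shows "card (adm (i,s) w) = (\<Sum>j\<in>{i..3}. (if (j, nxt i s) = w then 1 else 0)
            + (if dis (j, nxt i s) then 0 else card (adm (j, nxt i s) w)))"
proof -
  have fin: "finite (Aset i s w j)" for j
    unfolding Aset_def using adm_finite by simp
  have ne: "[] \<notin> adm x y" for x y by (simp add: admissible_paths_def)
  have hd: "\<forall>p\<in>Aset i s w j. hd p = (i,j,nxt i s)" for j unfolding Aset_def by auto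
  have disj: "\<forall>j\<in>{i..3}. \<forall>j'\<in>{i..3}. j \<noteq> j' \<longrightarrow> Aset i s w j \<inter> Aset i s w j' = {}"
  proof (intro ballI impI)
    fix j j' :: nat assume "j \<noteq> j'"
    show "Aset i s w j \<inter> Aset i s w j' = {}"
    proof (rule ccontr)
      assume "Aset i s w j \<inter> Aset i s w j' \<noteq> {}"
      then obtain p where "p \<in> Aset i s w j" "p \<in> Aset i s w j'" by blast
      then have "hd p = (i,j,nxt i s)" "hd p = (i,j',nxt i s)" using hd[of j] hd[of j'] by auto
      then show False using \<open>j \<noteq> j'\<close> by simp
    qed
  qed
  have "card (adm (i,s) w) = (\<Sum>j\<in>{i..3}. card (Aset i s w j))"
    unfolding adm_decomp[OF assms] by (rule card_UN_disjoint) (use fin disj in auto)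
  also have "\<dots> = (\<Sum>j\<in>{i..3}. (if (j, nxt i s) = w then 1 else 0)
            + (if dis (j, nxt i s) then 0 else card (adm (j, nxt i s) w)))"
  proof (rule sum.cong[OF refl])
    fix j :: nat
    let ?e = "(i,j,nxt i s)"
    let ?A = "(if (j, nxt i s) = w then {[?e]} else {})"
    let ?B = "(if dis (j, nxt i s) then {} else Cons ?e ` adm (j, nxt i s) w)"
    have "?A \<inter> ?B = {}" using ne by auto
    then have "card (Aset i s w j) = card ?A + card ?B"
      unfolding Aset_def by (rule card_Un_disjoint[rotated 2]) (use adm_finite in auto)
    moreover have "card (Cons ?e ` adm (j, nxt i s) w) = card (adm (j, nxt i s) w)"
      by (rule card_image) (simp add: inj_on_def)
    ultimately show "card (Aset i s w j) = (if (j, nxt i s) = w then 1 else 0)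
            + (if dis (j, nxt i s) then 0 else card (adm (j, nxt i s) w))" by simp
  qed
  finally show ?thesis .
qed


lemma adm_induct:
  assumes "\<And>i s. s < r \<Longrightarrow> (\<And>j. j \<in> {i..3} \<Longrightarrow> \<not> dis (j, nxt i s) \<Longrightarrow> P (j, nxt i s)) \<Longrightarrow> P (i,s)"
    and "\<And>i s. \<not> s < r \<Longrightarrow> P (i,s)"
  shows "P v"
proof (induction v rule: wf_induct[OF wf_measures[of "[\<lambda>(i,s). 3 - i, \<lambda>(i,s). D i s]"]])
  case (1 v)
  obtain i s where v: "v = (i,s)" by (cases v)
  show ?case
  proof (cases "s < r")
    case False then show ?thesis using assms(2) v by simp
  next
    case True
    show ?thesis unfolding v
    proof (rule assms(1)[OF True])
      fix j assume j: "j \<in> {i..3}" and nd: "\<not> dis (j, nxt i s)"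
      have "((j, nxt i s), v) \<in> measures [\<lambda>(i,s). 3 - i, \<lambda>(i,s). D i s]"
      proof (cases "j = i")
        case True then show ?thesis using D_next[of i s] nd v by (simp add: in_measures)
      next
        case False then have "3 - j < 3 - i" using j by auto
        then show ?thesis using v by (simp add: in_measures)
      qed
      then show "P (j, nxt i s)" using 1 by blast
    qed
  qed
qed

abbreviation "C v w \<equiv> card (adm v w)"

lemma down: "J < fst v \<Longrightarrow> C v (J,t) = 0"
proof (induction v rule: adm_induct)
  case (1 i s)
  have "C (i,s) (J,t) = (\<Sum>j\<in>{i..3}. (if (j, nxt i s) = (J,t) then 1 else 0)
            + (if dis (j, nxt i s) then 0 else C (j, nxt i s) (J,t)))" by (rule card_rec) fact
  also have "\<dots> = 0"
    by (rule sum.neutral) (use 1 in auto)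
  finally show ?case .
next
  case (2 i s) then show ?case using adm_empty by simp
qed

lemma same_level:
  assumes "k < r" "J \<le> 3"
  shows "C (J,k) (J,t) = (if nxt J k = t then 1 else 0) + (if dis (J, nxt J k) then 0 else C (J, nxt J k) (J,t))"
proof -
  have "C (J,k) (J,t) = (\<Sum>j\<in>{J..3}. (if (j, nxt J k) = (J,t) then 1 else 0)
            + (if dis (j, nxt J k) then 0 else C (j, nxt J k) (J,t)))" by (rule card_rec) fact
  also have "\<dots> = (if (J, nxt J k) = (J,t) then 1 else 0)
            + (if dis (J, nxt J k) then 0 else C (J, nxt J k) (J,t)) + (\<Sum>j\<in>{Suc J..3}. (if (j, nxt J k) = (J,t) then 1 else 0)
            + (if dis (j, nxt J k) then 0 else C (j, nxt J k) (J,t)))"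
    using assms(2) by (simp add: sum.atLeast_Suc_atMost)
  also have "(\<Sum>j\<in>{Suc J..3}. (if (j, nxt J k) = (J,t) then 1 else 0)
            + (if dis (j, nxt J k) then 0 else C (j, nxt J k) (J,t))) = 0"
    by (rule sum.neutral) (auto simp: down)
  finally show ?thesis by simp
qed

lemma sum03: "(\<Sum>j\<in>{0..3::nat}. f j) = f 0 + f 1 + f 2 + (f 3 :: 'a::comm_monoid_add)"
  by (simp add: numeral_eq_Suc add.assoc)
lemma sum13: "(\<Sum>j\<in>{1..3::nat}. f j) = f 1 + f 2 + (f 3 :: 'a::comm_monoid_add)"
  by (simp add: numeral_eq_Suc add.assoc)
lemma sum23: "(\<Sum>j\<in>{2..3::nat}. f j) = f 2 + (f 3 :: 'a::comm_monoid_add)"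
  by (simp add: numeral_eq_Suc add.assoc)

end

locale main = gr +
  fixes n :: nat
  assumes r2: "2 \<le> r" and g3: "gcd (m 3) r = n" and gu: "\<And>l. l \<le> 2 \<Longrightarrow> gcd (m l) r = 1"
begin

definition nu :: "nat \<Rightarrow> nat \<Rightarrow> nat" where
  "nu l d = nat ((- (int d * int (m l))) mod int r)"

lemma int_nu: "int (nu l d) = (- (int d * int (m l))) mod int r"
  unfolding nu_def using rpos by simp

lemma nu_lt: "nu l d < r"
  using int_nu[of l d] rpos by (metis of_nat_less_iff pos_mod_bound of_nat_0_less_iff)

lemma nu_step: "nxt l (nu l (Suc d)) = nu l d"
proof -
  have "int (nxt l (nu l (Suc d))) = (int (nu l (Suc d)) + int (m l)) mod int r"
    unfolding nxt_def by (simp add: zmod_int)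
  also have "\<dots> = ((- (int (Suc d) * int (m l))) + int (m l)) mod int r"
    unfolding int_nu by (simp add: mod_add_left_eq)
  also have "\<dots> = int (nu l d)" unfolding int_nu by (simp add: algebra_simps)
  finally show ?thesis by simp
qed

lemma dis_unit: "l \<le> 2 \<Longrightarrow> dis (l,x) \<longleftrightarrow> x = 0"
  using gu by (auto simp: distinguished_def)

lemma cop: "l \<le> 2 \<Longrightarrow> coprime (int (m l)) (int r)"
  using gu[of l] by (simp add: coprime_iff_gcd_eq_1)

lemma nu_eq_iff: "l \<le> 2 \<Longrightarrow> nu l p = nu l q \<longleftrightarrow> [int p = int q] (mod int r)"
proof -
  assume l: "l \<le> 2"
  have "nu l p = nu l q \<longleftrightarrow> int (nu l p) = int (nu l q)" by simp
  also have "\<dots> \<longleftrightarrow> [- (int p * int (m l)) = - (int q * int (m l))] (mod int r)"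
    unfolding int_nu cong_def ..
  also have "\<dots> \<longleftrightarrow> [int p * int (m l) = int q * int (m l)] (mod int r)"
    by (simp add: cong_def mod_eq_dvd_iff dvd_diff_commute)
  also have "\<dots> \<longleftrightarrow> [int p = int q] (mod int r)"
    using cong_mult_rcancel[OF cop[OF l, simplified coprime_commute]] by (metis coprime_commute cop l cong_mult_rcancel)
  finally show ?thesis .
qed

lemma nu0: "nu l 0 = 0" unfolding nu_def by simp

lemma nu_zero_iff: "l \<le> 2 \<Longrightarrow> nu l p = 0 \<longleftrightarrow> r dvd p"
  using nu_eq_iff[of l p 0] nu0[of l] by (simp add: cong_0_iff)

lemma nu_inj: "l \<le> 2 \<Longrightarrow> inj_on (nu l) {..<r}"
  by (auto simp: inj_on_def nu_eq_iff cong_def)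

lemma nu_img: "l \<le> 2 \<Longrightarrow> nu l ` {..<r} = {..<r}"
  by (rule endo_inj_surj) (auto simp: nu_lt nu_inj)

lemma nu_img1: "l \<le> 2 \<Longrightarrow> nu l ` {1..<r} = {1..<r}"
proof -
  assume l: "l \<le> 2"
  have "inj_on (nu l) {1..<r}" using nu_inj[OF l] by (rule inj_on_subset) auto
  moreover have "nu l ` {1..<r} \<subseteq> {1..<r}"
  proof
    fix y assume "y \<in> nu l ` {1..<r}"
    then obtain x where x: "1 \<le> x" "x < r" "y = nu l x" by auto
    then have "\<not> r dvd x" by (auto dest: nat_dvd_not_less)
    then show "y \<in> {1..<r}" using x nu_lt nu_zero_iff[OF l, of x] by auto
  qed
  ultimately show ?thesis by (intro endo_inj_surj) auto
qed

lemma sum_nu: "l \<le> 2 \<Longrightarrow> (\<Sum>x<r. h x) = (\<Sum>p<r. h (nu l p))"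
  using sum.reindex[OF nu_inj, of l h] nu_img by simp

lemma sum_nu1: "l \<le> 2 \<Longrightarrow> (\<Sum>x\<in>{1..<r}. h x) = (\<Sum>p\<in>{1..<r}. h (nu l p))"
proof -
  assume l: "l \<le> 2"
  have "inj_on (nu l) {1..<r}" using nu_inj[OF l] by (rule inj_on_subset) auto
  from sum.reindex[OF this, of h] show ?thesis using nu_img1[OF l] by simp
qed

lemma nu_r: "nu l r = 0" unfolding nu_def by simp

lemma nu_surj: "l \<le> 2 \<Longrightarrow> k < r \<Longrightarrow> \<exists>d. 1 \<le> d \<and> d \<le> r \<and> k = nu l d"
proof -
  assume l: "l \<le> 2" and k: "k < r"
  then obtain p where p: "p < r" "k = nu l p" using nu_img[OF l] by (metis imageE lessThan_iff)
  show ?thesis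
  proof (cases "p = 0")
    case True then show ?thesis using p nu0 nu_r rpos by (intro exI[of _ r]) auto
  next
    case False then show ?thesis using p by (intro exI[of _ p]) auto
  qed
qed

lemma unit_orbit:
  assumes l: "l \<le> 2"
    and f: "\<And>k. k < r \<Longrightarrow> f k = g (nxt l k) + (if nxt l k = 0 then 0 else f (nxt l k))"
  shows "1 \<le> d \<Longrightarrow> d \<le> r \<Longrightarrow> f (nu l d) = (\<Sum>p<d. g (nu l p))"
proof (induction d)
  case 0 then show ?case by simp
next
  case (Suc d)
  have "f (nu l (Suc d)) = g (nu l d) + (if nu l d = 0 then 0 else f (nu l d))"
    using f[OF nu_lt] nu_step by simp
  show ?case
  proof (cases "d = 0")
    case True then show ?thesis using \<open>f (nu l (Suc d)) = _\<close> nu0 by simp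
  next
    case False
    then have "nu l d \<noteq> 0" using nu_zero_iff[OF l, of d] Suc.prems by (auto dest: dvd_imp_le)
    then show ?thesis using \<open>f (nu l (Suc d)) = _\<close> Suc False by (simp add: add.commute)
  qed
qed


lemma nxt_lt: "nxt l k < r" unfolding nxt_def using rpos by simp

lemma C_same0:
  assumes l: "l \<le> 2" and k: "k < r" shows "C (l,k) (l,0) = 1"
proof -
  have f: "C (l,k) (l,0) = (if nxt l k = 0 then 1 else 0) + (if nxt l k = 0 then 0 else C (l, nxt l k) (l,0))"
    if "k < r" for k
    using same_level[OF that, of l 0] l dis_unit[OF l] by simp
  have "C (l, nu l d) (l,0) = (\<Sum>p<d. if nu l p = 0 then 1 else 0)" if "1 \<le> d" "d \<le> r" for d
    by (rule unit_orbit[OF l, where f = "\<lambda>k. C (l,k) (l,0)"]) (use f that in auto)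
  moreover have "(\<Sum>p<d. if nu l p = 0 then 1 else 0) = (1::nat)" if "1 \<le> d" "d \<le> r" for d
  proof -
    have "(\<Sum>p<d. if nu l p = 0 then 1 else 0) = (\<Sum>p<d. if p = 0 then 1 else (0::nat))"
    proof (rule sum.cong[OF refl])
      fix p assume "p \<in> {..<d}"
      then have "p < r" using that by simp
      then show "(if nu l p = 0 then 1 else 0) = (if p = 0 then 1 else (0::nat))"
        using nu_zero_iff[OF l, of p] by (auto dest: nat_dvd_not_less)
    qed
    also have "\<dots> = 1" using that by simp
    finally show ?thesis .
  qed
  ultimately show ?thesis using nu_surj[OF l k] by auto
qed

lemma C_up:
  assumes l: "l \<le> 1" and d: "1 \<le> d" "d \<le> r"
  shows "C (l, nu l d) (Suc l, 0) = d"
proof -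
  have f: "C (l,k) (Suc l,0) = 1 + (if nxt l k = 0 then 0 else C (l, nxt l k) (Suc l, 0))" if k: "k<r" for k
  proof -
    have "C (l,k) (Suc l,0) = (\<Sum>j\<in>{l..3}. (if (j, nxt l k) = (Suc l,0) then 1 else 0)
            + (if dis (j, nxt l k) then 0 else C (j, nxt l k) (Suc l,0)))" by (rule card_rec) fact
    also have "\<dots> = ((if (l, nxt l k) = (Suc l,0) then 1 else 0)
            + (if dis (l, nxt l k) then 0 else C (l, nxt l k) (Suc l,0))) +
            ((if (Suc l, nxt l k) = (Suc l,0) then 1 else 0)
            + (if dis (Suc l, nxt l k) then 0 else C (Suc l, nxt l k) (Suc l,0))) +
            (\<Sum>j\<in>{Suc (Suc l)..3}. (if (j, nxt l k) = (Suc l,0) then 1 else 0)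
            + (if dis (j, nxt l k) then 0 else C (j, nxt l k) (Suc l,0)))"
      using l by (simp add: sum.atLeast_Suc_atMost add.assoc)
    also have "(\<Sum>j\<in>{Suc (Suc l)..3}. (if (j, nxt l k) = (Suc l,0) then 1 else 0)
            + (if dis (j, nxt l k) then 0 else C (j, nxt l k) (Suc l,0))) = 0"
      by (rule sum.neutral) (auto simp: down)
    finally show ?thesis using l dis_unit[of l] dis_unit[of "Suc l"] C_same0[of "Suc l" "nxt l k"] nxt_lt
      by simp
  qed
  have "C (l, nu l d) (Suc l, 0) = (\<Sum>p<d. 1)"
    by (rule unit_orbit[where f = "\<lambda>k. C (l,k) (Suc l,0)"]) (use f l d in auto)
  then show ?thesis by simp
qed


lemma sum_nz: "(\<Sum>x<r. if x = 0 then 0 else h x) = (\<Sum>x\<in>{1..<r}. (h x :: 'a::comm_monoid_add))"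
proof -
  have "(\<Sum>x<r. if x = 0 then 0 else h x) = (\<Sum>x\<in>{0..<r}. if x = 0 then 0 else h x)"
    by (simp add: atLeast0LessThan)
  also have "\<dots> = (\<Sum>x\<in>{Suc 0..<r}. if x = 0 then 0 else h x)"
    using rpos by (simp add: sum.atLeast_Suc_lessThan)
  also have "\<dots> = (\<Sum>x\<in>{1..<r}. h x)" by (rule sum.cong) auto
  finally show ?thesis .
qed

lemma C02: "C (0,0) (2,0) = r + (\<Sum>d\<in>{1..<r}. d)"
proof -
  have f: "C (0,k) (2,0) = ((if nxt 0 k = 0 then 0 else C (1, nxt 0 k) (2,0)) + 1)
     + (if nxt 0 k = 0 then 0 else C (0, nxt 0 k) (2, 0))" if k: "k<r" for k
  proof -
    have "C (0,k) (2,0) = (\<Sum>j\<in>{0..3}. (if (j, nxt 0 k) = (2,0) then 1 else 0)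
            + (if dis (j, nxt 0 k) then 0 else C (j, nxt 0 k) (2,0)))" by (rule card_rec) fact
    then have "C (0,k) (2,0) = ((if (0::nat, nxt 0 k) = (2,0) then 1 else 0)
            + (if dis (0, nxt 0 k) then 0 else C (0, nxt 0 k) (2,0))) + ((if (1::nat, nxt 0 k) = (2,0) then 1 else 0)
            + (if dis (1, nxt 0 k) then 0 else C (1, nxt 0 k) (2,0))) + ((if (2::nat, nxt 0 k) = (2,0) then 1 else 0)
            + (if dis (2, nxt 0 k) then 0 else C (2, nxt 0 k) (2,0))) + ((if (3::nat, nxt 0 k) = (2,0) then 1 else 0)
            + (if dis (3, nxt 0 k) then 0 else C (3, nxt 0 k) (2,0)))"
      by (simp only: sum03)
    then show ?thesis using dis_unit[of 0] dis_unit[of 1] dis_unit[of 2] C_same0[of 2 "nxt 0 k"] nxt_lt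
      by (simp add: down)
  qed
  have "C (0, nu 0 r) (2,0) = (\<Sum>p<r. (\<lambda>x. (if x = 0 then 0 else C (1, x) (2,0)) + 1) (nu 0 p))"
    by (rule unit_orbit[where f = "\<lambda>k. C (0,k) (2,0)"]) (use f rpos in auto)
  also have "\<dots> = (\<Sum>x<r. (if x = 0 then 0 else C (1, x) (2,0)) + 1)"
    using sum_nu[of 0 "\<lambda>x. (if x = 0 then 0 else C (1, x) (2,0)) + 1"] by simp
  also have "\<dots> = (\<Sum>x\<in>{1..<r}. C (1, x) (2,0)) + r"
    by (simp only: sum.distrib sum_nz) simp
  also have "(\<Sum>x\<in>{1..<r}. C (1, x) (2,0)) = (\<Sum>d\<in>{1..<r}. C (1, nu 1 d) (2,0))"
    using sum_nu1[of 1] by simp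
  also have "\<dots> = (\<Sum>d\<in>{1..<r}. d)"
    by (rule sum.cong[OF refl]) (use C_up[of 1] in \<open>auto simp: numeral_2_eq_2\<close>)
  finally show ?thesis using nu_r by simp
qed

lemma npos: "0 < n" using g3 rpos by auto
lemma ndvd: "n dvd r" using g3 by auto
lemma ndvdm: "n dvd m 3" using g3 by auto

lemma dis3: "dis (3,x) \<longleftrightarrow> x < n" using g3 by (simp add: distinguished_def)

lemma nxt3_mod: "nxt 3 k mod n = k mod n"
proof -
  have "nxt 3 k mod n = (k + m 3) mod n" unfolding nxt_def using ndvd by (simp add: mod_mod_cancel)
  also have "\<dots> = (k + m 3 mod n) mod n" by (simp add: mod_add_right_eq)
  also have "\<dots> = k mod n" using ndvdm by simp
  finally show ?thesis .
qed

lemma C3: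
  assumes t: "t < n"
  shows "k < r \<Longrightarrow> C (3,k) (3,t) = (if k mod n = t then 1 else 0)"
proof (induction k rule: orbit_induct[where l = 3])
  case (1 k)
  let ?x = "nxt 3 k"
  have eq: "C (3,k) (3,t) = (if ?x = t then 1 else 0) + (if ?x < n then 0 else C (3, ?x) (3,t))"
    using same_level[OF 1(2), of 3 t] dis3 by simp
  show ?case
  proof (cases "?x < n")
    case True then show ?thesis using eq nxt3_mod[of k] by simp
  next
    case False
    then have "C (3, ?x) (3,t) = (if k mod n = t then 1 else 0)" using 1 dis3 nxt_lt nxt3_mod by simp
    then show ?thesis using eq False t by simp
  qed
qed

lemma T3:
  assumes "x < r" "t < n"
  shows "(if (3::nat, x) = (3, t) then 1 else 0) + (if dis (3,x) then 0 else C (3,x) (3,t)) = (if x mod n = t then 1 else (0::nat))"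
  using assms C3[OF assms(2) assms(1)] dis3 by auto

lemma f2_rec:
  assumes t: "t < n" and k: "k < r"
  shows "C (2,k) (3,t) = (if nxt 2 k mod n = t then 1 else 0) + (if nxt 2 k = 0 then 0 else C (2, nxt 2 k) (3,t))"
proof -
  have "C (2,k) (3,t) = (\<Sum>j\<in>{2..3}. (if (j, nxt 2 k) = (3,t) then 1 else 0)
            + (if dis (j, nxt 2 k) then 0 else C (j, nxt 2 k) (3,t)))" by (rule card_rec) fact
  then have "C (2,k) (3,t) = ((if (2::nat, nxt 2 k) = (3,t) then 1 else 0)
            + (if dis (2, nxt 2 k) then 0 else C (2, nxt 2 k) (3,t))) + ((if (3::nat, nxt 2 k) = (3,t) then 1 else 0)
            + (if dis (3, nxt 2 k) then 0 else C (3, nxt 2 k) (3,t)))"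
    by (simp only: sum23)
  then show ?thesis using dis_unit[of 2] T3[OF nxt_lt t, of 2 k] by simp
qed

lemma f1_rec:
  assumes t: "t < n" and k: "k < r"
  shows "C (1,k) (3,t) = ((if nxt 1 k = 0 then 0 else C (2, nxt 1 k) (3,t)) + (if nxt 1 k mod n = t then 1 else 0))
     + (if nxt 1 k = 0 then 0 else C (1, nxt 1 k) (3,t))"
proof -
  have "C (1,k) (3,t) = (\<Sum>j\<in>{1..3}. (if (j, nxt 1 k) = (3,t) then 1 else 0)
            + (if dis (j, nxt 1 k) then 0 else C (j, nxt 1 k) (3,t)))" by (rule card_rec) fact
  then have "C (1,k) (3,t) = ((if (1::nat, nxt 1 k) = (3,t) then 1 else 0)
            + (if dis (1, nxt 1 k) then 0 else C (1, nxt 1 k) (3,t))) + ((if (2::nat, nxt 1 k) = (3,t) then 1 else 0)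
            + (if dis (2, nxt 1 k) then 0 else C (2, nxt 1 k) (3,t))) + ((if (3::nat, nxt 1 k) = (3,t) then 1 else 0)
            + (if dis (3, nxt 1 k) then 0 else C (3, nxt 1 k) (3,t)))"
    by (simp only: sum13)
  then show ?thesis using dis_unit[of 1] dis_unit[of 2] T3[OF nxt_lt t, of 1 k] by simp
qed

lemma f0_rec:
  assumes t: "t < n" and k: "k < r"
  shows "C (0,k) (3,t) = ((if nxt 0 k = 0 then 0 else C (1, nxt 0 k) (3,t) + C (2, nxt 0 k) (3,t))
        + (if nxt 0 k mod n = t then 1 else 0))
     + (if nxt 0 k = 0 then 0 else C (0, nxt 0 k) (3,t))"
proof -
  have "C (0,k) (3,t) = (\<Sum>j\<in>{0..3}. (if (j, nxt 0 k) = (3,t) then 1 else 0)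
            + (if dis (j, nxt 0 k) then 0 else C (j, nxt 0 k) (3,t)))" by (rule card_rec) fact
  then have "C (0,k) (3,t) = ((if (0::nat, nxt 0 k) = (3,t) then 1 else 0)
            + (if dis (0, nxt 0 k) then 0 else C (0, nxt 0 k) (3,t))) + ((if (1::nat, nxt 0 k) = (3,t) then 1 else 0)
            + (if dis (1, nxt 0 k) then 0 else C (1, nxt 0 k) (3,t))) + ((if (2::nat, nxt 0 k) = (3,t) then 1 else 0)
            + (if dis (2, nxt 0 k) then 0 else C (2, nxt 0 k) (3,t))) + ((if (3::nat, nxt 0 k) = (3,t) then 1 else 0)
            + (if dis (3, nxt 0 k) then 0 else C (3, nxt 0 k) (3,t)))"
    by (simp only: sum03)
  then show ?thesis using dis_unit[of 0] dis_unit[of 1] dis_unit[of 2] T3[OF nxt_lt t, of 0 k] by simp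
qed


lemma int_nu_mod: "int (nu l p mod n) = (- (int p * int (m l))) mod int n"
proof -
  have "int (nu l p mod n) = int (nu l p) mod int n" by (simp add: zmod_int)
  also have "\<dots> = (- (int p * int (m l))) mod int n"
    unfolding int_nu using ndvd by (simp add: mod_mod_cancel)
  finally show ?thesis .
qed

end

lemma cong_lin:
  fixes u A x t N :: int
  assumes "N dvd (u*A - 1)"
  shows "N dvd (-(x*u) - t) \<longleftrightarrow> N dvd (x + A*t)"
proof
  assume h: "N dvd (-(x*u) - t)"
  have "x + A*t = (-A) * (-(x*u) - t) + (-x) * (u*A - 1)" by (simp add: algebra_simps)
  then show "N dvd (x + A*t)" using h assms by (metis dvd_add dvd_mult)
next
  assume h: "N dvd (x + A*t)"
  have "-(x*u) - t = (-u) * (x + A*t) + t * (u*A - 1)" by (simp add: algebra_simps)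
  then show "N dvd (-(x*u) - t)" using h assms by (metis dvd_add dvd_mult)
qed

lemma mod_eq_nat_iff:
  fixes N :: int and p t :: nat
  assumes "0 < N"
  shows "(int p mod N = e mod N) \<longleftrightarrow> N dvd (int p - e)"
  by (simp add: mod_eq_dvd_iff)

lemma swap_sum: "(\<Sum>d<N. \<Sum>p<d. h p) = (\<Sum>p<N. (N - 1 - p) * (h p :: nat))"
proof (induction N)
  case 0 then show ?case by simp
next
  case (Suc N)
  have "(\<Sum>d<Suc N. \<Sum>p<d. h p) = (\<Sum>p<N. (N - 1 - p) * h p) + (\<Sum>p<N. h p)"
    using Suc by simp
  also have "\<dots> = (\<Sum>p<N. (N - 1 - p) * h p + h p)" by (simp only: sum.distrib)
  also have "\<dots> = (\<Sum>p<N. (N - p) * h p)"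
  proof (rule sum.cong[OF refl])
    fix p assume "p \<in> {..<N}"
    then have "N - p = Suc (N - 1 - p)" by auto
    then show "(N - 1 - p) * h p + h p = (N - p) * h p" by simp
  qed
  also have "\<dots> = (\<Sum>p<Suc N. (Suc N - 1 - p) * h p)" by simp
  finally show ?case .
qed

lemma ap_set:
  fixes c n R :: nat
  assumes "c < n"
  shows "{x. x < n * R \<and> x mod n = c} = (\<lambda>j. c + n * j) ` {..<R}"
proof
  show "{x. x < n * R \<and> x mod n = c} \<subseteq> (\<lambda>j. c + n * j) ` {..<R}"
  proof
    fix x assume x: "x \<in> {x. x < n * R \<and> x mod n = c}"
    have xc: "x mod n = c" using x by simp
    have e: "x div n * n + c = x" using div_mult_mod_eq[of x n] unfolding xc .
    then have "x = c + n * (x div n)" by (simp add: algebra_simps)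
    moreover have "x < R * n" using x by (simp add: mult.commute)
    then have "x div n < R" by (rule less_mult_imp_div_less)
    ultimately show "x \<in> (\<lambda>j. c + n * j) ` {..<R}" by blast
  qed
next
  show "(\<lambda>j. c + n * j) ` {..<R} \<subseteq> {x. x < n * R \<and> x mod n = c}"
  proof
    fix x assume "x \<in> (\<lambda>j. c + n * j) ` {..<R}"
    then obtain j where j: "j < R" "x = c + n * j" by auto
    have "c + n * j < n * Suc j" using assms by simp
    also have "n * Suc j \<le> n * R" using j(1) by (intro mult_le_mono2) simp
    finally show "x \<in> {x. x < n * R \<and> x mod n = c}" using j assms by simp
  qed
qed

lemma ap_sum:
  fixes c n R :: nat
  assumes "c < n"
  shows "(\<Sum>x<n * R. if x mod n = c then h x else 0) = (\<Sum>j<R. (h (c + n * j) :: 'a::comm_monoid_add))"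
proof -
  have "(\<Sum>x<n * R. if x mod n = c then h x else 0) = (\<Sum>x\<in>{x. x < n * R \<and> x mod n = c}. h x)"
  proof -
    have "(\<Sum>x<n * R. if x mod n = c then h x else 0) = (\<Sum>x\<in>{x\<in>{..<n * R}. x mod n = c}. h x)"
      by (rule sum.inter_filter[symmetric]) simp
    also have "{x\<in>{..<n * R}. x mod n = c} = {x. x < n * R \<and> x mod n = c}" by auto
    finally show ?thesis .
  qed
  also have "\<dots> = (\<Sum>x\<in>(\<lambda>j. c + n * j) ` {..<R}. h x)" using ap_set[OF assms] by simp
  also have "\<dots> = (\<Sum>j<R. h (c + n * j))"
    by (rule sum.reindex_cong[of "\<lambda>j. c + n * j"]) (use assms in \<open>auto simp: inj_on_def\<close>)
  finally show ?thesis .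
qed

lemma cnt_lt:
  fixes c n d :: nat
  assumes "c < n"
  shows "(\<Sum>p<d. if p mod n = c then 1 else 0) = d div n + (if c < d mod n then 1 else (0::nat))"
proof (induction d)
  case 0 then show ?case by simp
next
  case (Suc d)
  have n: "0 < n" using assms by simp
  have dm: "d mod n < n" using n by simp
  show ?case
  proof (cases "Suc (d mod n) = n")
    case True
    then have "Suc d mod n = 0" "Suc d div n = Suc (d div n)"
      by (simp_all add: mod_Suc div_Suc)
    then show ?thesis using Suc True assms by auto
  next
    case False
    then have "Suc d mod n = Suc (d mod n)" "Suc d div n = d div n"
      by (simp_all add: mod_Suc div_Suc)
    then show ?thesis using Suc assms by auto
  qed
qed

lemma gauss_rat: "(\<Sum>j<R. of_nat j :: rat) = of_nat R * (of_nat R - 1) / 2"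
  by (induction R) (auto simp: field_simps)


lemma sum_div:
  fixes n R :: nat
  shows "(\<Sum>d<R * n. d div n) = n * (\<Sum>j<R. j)"
proof -
  have "(\<Sum>d<R * n. d div n) = (\<Sum>j<R. \<Sum>d\<in>{j * n..<j * n + n}. d div n)"
    by (rule sum.nat_group[symmetric])
  also have "\<dots> = (\<Sum>j<R. n * j)"
  proof (rule sum.cong[OF refl])
    fix j
    have "(\<Sum>d\<in>{j * n..<j * n + n}. d div n) = (\<Sum>d\<in>{j * n..<j * n + n}. j)"
    proof (rule sum.cong[OF refl])
      fix d assume "d \<in> {j * n..<j * n + n}"
      then show "d div n = j" by (intro div_nat_eqI) (auto simp: algebra_simps)
    qed
    then show "(\<Sum>d\<in>{j * n..<j * n + n}. d div n) = n * j" by simp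
  qed
  finally show ?thesis by (simp add: sum_distrib_left)
qed

lemma sum_l_l1: "(\<Sum>l\<in>{1..N}. of_nat l * (of_nat l + 1) :: rat) = of_nat N * (of_nat N + 1) * (of_nat N + 2) / 3"
  by (induction N) (auto simp: field_simps)


locale main2 = main +
  fixes m2inv a1 a2 :: nat
  assumes m2inv: "[m 2 * m2inv = 1] (mod r)" and a1: "[m 1 * a1 = 1] (mod n)" and a2: "[m 2 * a2 = 1] (mod n)"
begin

lemma nu_mod_iff:
  assumes "[m l * a = 1] (mod n)" "t < n"
  shows "(nu l p mod n = t) \<longleftrightarrow> (p mod n = nat ((- (int a * int t)) mod int n))"
proof -
  have N: "0 < int n" using npos by simp
  have ua: "int n dvd (int (m l) * int a - 1)"
    using assms(1) by (metis cong_iff_dvd_diff cong_int_iff of_nat_1 of_nat_mult)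
  have "(nu l p mod n = t) \<longleftrightarrow> int (nu l p mod n) = int t mod int n"
    using assms(2) by simp
  also have "\<dots> \<longleftrightarrow> int n dvd (-(int p * int (m l)) - int t)"
    unfolding int_nu_mod by (simp add: mod_eq_dvd_iff)
  also have "\<dots> \<longleftrightarrow> int n dvd (int p + int a * int t)"
    using cong_lin[OF ua] by simp
  also have "\<dots> \<longleftrightarrow> int p mod int n = (- (int a * int t)) mod int n"
    by (simp add: mod_eq_dvd_iff)
  also have "\<dots> \<longleftrightarrow> p mod n = nat ((- (int a * int t)) mod int n)"
    using N by (metis nat_int of_nat_mod pos_mod_sign int_nat_eq zmod_int)
  finally show ?thesis .
qed


definition eps where "eps t = nat ((- (int a2 * int t)) mod int n)"
definition del where "del t = nat ((- (int a1 * int t)) mod int n)"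
definition R where "R = r div n"
definition W where "W c = (\<Sum>p<r. (r - 1 - p) * (if p mod n = c then 1 else 0))"

lemma rR: "r = n * R" unfolding R_def using ndvd by simp
lemma Rpos: "0 < R" using rR rpos by (cases R) auto

lemma eps_lt: "eps t < n" unfolding eps_def using npos
  by (metis int_nat_eq nat_less_iff of_nat_0_less_iff pos_mod_bound pos_mod_sign)
lemma del_lt: "del t < n" unfolding del_def using npos
  by (metis int_nat_eq nat_less_iff of_nat_0_less_iff pos_mod_bound pos_mod_sign)

lemma sum0_split: "(\<Sum>d<r. F d) = F 0 + (\<Sum>d\<in>{1..<r}. (F d :: 'a::comm_monoid_add))"
proof -
  have "(\<Sum>d<r. F d) = (\<Sum>d\<in>{0..<r}. F d)" by (simp add: atLeast0LessThan)
  also have "\<dots> = F 0 + (\<Sum>d\<in>{Suc 0..<r}. F d)" using rpos by (simp add: sum.atLeast_Suc_lessThan)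
  finally show ?thesis by simp
qed

lemma cnt_R: "c < n \<Longrightarrow> (\<Sum>x<r. if x mod n = c then 1 else 0) = R"
  using ap_sum[where c=c and n=n and R=R and h="\<lambda>_. 1::nat"] rR by simp

lemma F2:
  assumes t: "t < n" and d: "1 \<le> d" "d \<le> r"
  shows "C (2, nu 2 d) (3,t) = (\<Sum>p<d. if p mod n = eps t then 1 else 0)"
proof -
  have "C (2, nu 2 d) (3,t) = (\<Sum>p<d. (\<lambda>x. if x mod n = t then 1 else 0) (nu 2 p))"
    by (rule unit_orbit[where f = "\<lambda>k. C (2,k) (3,t)"]) (use f2_rec[OF t] d in auto)
  also have "\<dots> = (\<Sum>p<d. if p mod n = eps t then 1 else 0)"
    by (rule sum.cong[OF refl]) (use nu_mod_iff[OF a2 t] in \<open>auto simp: eps_def\<close>)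
  finally show ?thesis .
qed

lemma S2: "t < n \<Longrightarrow> (\<Sum>x\<in>{1..<r}. C (2,x) (3,t)) = W (eps t)"
proof -
  assume t: "t < n"
  have "(\<Sum>x\<in>{1..<r}. C (2,x) (3,t)) = (\<Sum>d\<in>{1..<r}. C (2, nu 2 d) (3,t))"
    using sum_nu1[of 2] by simp
  also have "\<dots> = (\<Sum>d\<in>{1..<r}. \<Sum>p<d. if p mod n = eps t then 1 else 0)"
    by (rule sum.cong[OF refl]) (use F2[OF t] in auto)
  also have "\<dots> = (\<Sum>d<r. \<Sum>p<d. if p mod n = eps t then 1 else 0)"
    using sum0_split[of "\<lambda>d. \<Sum>p<d. if p mod n = eps t then 1 else (0::nat)"] by simp
  also have "\<dots> = W (eps t)" unfolding W_def by (rule swap_sum)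
  finally show ?thesis .
qed

lemma C20: "t < n \<Longrightarrow> C (2,0) (3,t) = R"
  using F2[of t r] rpos nu_r cnt_R[OF eps_lt] by simp

lemma Y: "t < n \<Longrightarrow> C (1,0) (3,t) = R + W (eps t)"
proof -
  assume t: "t < n"
  have "C (1, nu 1 r) (3,t) = (\<Sum>p<r. (\<lambda>x. (if x = 0 then 0 else C (2, x) (3,t)) + (if x mod n = t then 1 else 0)) (nu 1 p))"
    by (rule unit_orbit[where f = "\<lambda>k. C (1,k) (3,t)"]) (use f1_rec[OF t] rpos in auto)
  also have "\<dots> = (\<Sum>x<r. (if x = 0 then 0 else C (2, x) (3,t)) + (if x mod n = t then 1 else 0))"
    using sum_nu[of 1 "\<lambda>x. (if x = 0 then 0 else C (2, x) (3,t)) + (if x mod n = t then 1 else 0)"] by simp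
  also have "\<dots> = W (eps t) + R"
    by (simp only: sum.distrib sum_nz S2[OF t] cnt_R[OF t])
  finally show ?thesis using nu_r by simp
qed

lemma W_val:
  assumes c: "c < n"
  shows "(of_nat (W c) :: rat) = of_nat R * (of_nat r - 1 - of_nat c) - of_nat n * (of_nat R * (of_nat R - 1) / 2)"
proof -
  have "W c = (\<Sum>p<n * R. if p mod n = c then r - 1 - p else 0)"
    unfolding W_def rR[symmetric] by (rule sum.cong) auto
  also have "\<dots> = (\<Sum>j<R. r - 1 - (c + n * j))" by (rule ap_sum[OF c])
  finally have "(of_nat (W c) :: rat) = (\<Sum>j<R. of_nat (r - 1 - (c + n * j)))" by simp
  also have "\<dots> = (\<Sum>j<R. of_nat r - 1 - of_nat c - of_nat n * of_nat j)"
  proof (rule sum.cong[OF refl])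
    fix j assume "j \<in> {..<R}"
    then have j: "Suc j \<le> R" by simp
    have "c + n * j < n * Suc j" using c by simp
    also have "n * Suc j \<le> n * R" using j by (rule mult_le_mono2)
    finally have "c + n * j + 1 \<le> r" using rR by simp
    then show "(of_nat (r - 1 - (c + n * j)) :: rat) = of_nat r - 1 - of_nat c - of_nat n * of_nat j"
      by (simp add: of_nat_diff)
  qed
  also have "\<dots> = of_nat R * (of_nat r - 1 - of_nat c) - of_nat n * (\<Sum>j<R. of_nat j)"
    by (simp add: sum_subtractf sum_distrib_left)
  finally show ?thesis by (simp add: gauss_rat)
qed


definition mu where "mu = m2inv * m 1"
definition Dp where "Dp q = (q * mu) mod r"

lemma cop_mu: "coprime mu r"
proof -
  have "coprime (m 2 * m2inv) r"
    using cong_imp_coprime[OF cong_sym[OF m2inv]] by simp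
  then have "coprime m2inv r" by simp
  moreover have "coprime (m 1) r" using gu[of 1] by (simp add: coprime_iff_gcd_eq_1)
  ultimately show ?thesis unfolding mu_def by simp
qed

lemma Dp_lt: "Dp q < r" unfolding Dp_def using rpos by simp

lemma Dp_nz: "1 \<le> q \<Longrightarrow> q < r \<Longrightarrow> Dp q \<noteq> 0"
proof
  assume q: "1 \<le> q" "q < r" and "Dp q = 0"
  then have "r dvd q * mu" unfolding Dp_def by auto
  then have "r dvd q" using cop_mu by (metis coprime_commute coprime_dvd_mult_left_iff)
  then show False using q by (auto dest: nat_dvd_not_less)
qed

lemma Dp_inj: "inj_on Dp {1..<r}"
proof (rule inj_onI)
  fix q q' assume q: "q \<in> {1..<r}" "q' \<in> {1..<r}" and e: "Dp q = Dp q'"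
  then have "[q * mu = q' * mu] (mod r)" unfolding Dp_def cong_def by simp
  then have "[q = q'] (mod r)" using cop_mu by (simp add: cong_mult_rcancel_nat)
  then show "q = q'" using q by (simp add: cong_def)
qed

lemma Dp_img: "Dp ` {1..<r} = {1..<r}"
  by (rule endo_inj_surj) (use Dp_inj Dp_lt Dp_nz in \<open>auto simp: Suc_le_eq\<close>)

lemma nu1_Dp: "nu 1 q = nu 2 (Dp q)"
proof -
  have "[int (m 2 * m2inv) = int 1] (mod int r)" using m2inv by (simp only: cong_int_iff)
  then have c: "[int (m 2) * int m2inv = 1] (mod int r)" by simp
  have "[int (Dp q) * int (m 2) = int q * int mu * int (m 2)] (mod int r)"
    unfolding Dp_def by (simp add: cong_def zmod_int mod_mult_left_eq)
  also have "int q * int mu * int (m 2) = (int q * int (m 1)) * (int (m 2) * int m2inv)"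
    unfolding mu_def by (simp add: algebra_simps)
  also have "[\<dots> = (int q * int (m 1)) * 1] (mod int r)"
    by (rule cong_mult[OF cong_refl c])
  finally have "[int (Dp q) * int (m 2) = int q * int (m 1)] (mod int r)" by simp
  then have "[- (int (Dp q) * int (m 2)) = - (int q * int (m 1))] (mod int r)"
    by (simp add: cong_minus_minus_iff)
  then have "int (nu 2 (Dp q)) = int (nu 1 q)" unfolding int_nu cong_def by simp
  then show ?thesis by simp
qed

lemma F1:
  assumes t: "t < n" and d: "1 \<le> d" "d \<le> r"
  shows "C (1, nu 1 d) (3,t) = (\<Sum>p<d. (\<lambda>x. (if x = 0 then 0 else C (2, x) (3,t)) + (if x mod n = t then 1 else 0)) (nu 1 p))"
  by (rule unit_orbit[where f = "\<lambda>k. C (1,k) (3,t)"]) (use f1_rec[OF t] d in auto)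

definition M where "M t = (\<Sum>q\<in>{1..<r}. (r - 1 - q) * (Dp q div n + (if eps t < Dp q mod n then 1 else 0)))"

lemma S1: "t < n \<Longrightarrow> (\<Sum>x\<in>{1..<r}. C (1,x) (3,t)) = M t + W (del t)"
proof -
  assume t: "t < n"
  define g where "g x = (if x = 0 then 0 else C (2, x) (3,t)) + (if x mod n = t then 1 else (0::nat))" for x
  have "(\<Sum>x\<in>{1..<r}. C (1,x) (3,t)) = (\<Sum>d\<in>{1..<r}. C (1, nu 1 d) (3,t))"
    using sum_nu1[of 1] by simp
  also have "\<dots> = (\<Sum>d\<in>{1..<r}. \<Sum>p<d. g (nu 1 p))"
  proof (rule sum.cong[OF refl])
    fix d assume "d \<in> {1..<r}"
    then have "1 \<le> d" "d \<le> r" by auto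
    from F1[OF t this] show "C (1, nu 1 d) (3,t) = (\<Sum>p<d. g (nu 1 p))" unfolding g_def by (simp only:)
  qed
  also have "\<dots> = (\<Sum>d<r. \<Sum>p<d. g (nu 1 p))"
    using sum0_split[of "\<lambda>d. \<Sum>p<d. g (nu 1 p)"] by simp
  also have "\<dots> = (\<Sum>p<r. (r - 1 - p) * g (nu 1 p))" by (rule swap_sum)
  also have "\<dots> = (\<Sum>p<r. (r - 1 - p) * (if nu 1 p = 0 then 0 else C (2, nu 1 p) (3,t)))
      + (\<Sum>p<r. (r - 1 - p) * (if nu 1 p mod n = t then 1 else 0))"
    unfolding g_def by (simp only: distrib_left sum.distrib)
  also have "(\<Sum>p<r. (r - 1 - p) * (if nu 1 p mod n = t then 1 else 0))
      = (\<Sum>p<r. (r - 1 - p) * (if p mod n = del t then 1 else 0))"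
  proof (rule sum.cong[OF refl])
    fix p
    have "(nu 1 p mod n = t) = (p mod n = del t)" using nu_mod_iff[OF a1 t] unfolding del_def by blast
    then show "(r - 1 - p) * (if nu 1 p mod n = t then 1 else 0) = (r - 1 - p) * (if p mod n = del t then 1 else 0)"
      by (simp only:)
  qed
  also have "(\<Sum>p<r. (r - 1 - p) * (if nu 1 p = 0 then 0 else C (2, nu 1 p) (3,t)))
      = (\<Sum>p\<in>{1..<r}. (r - 1 - p) * (if nu 1 p = 0 then 0 else C (2, nu 1 p) (3,t)))"
    using sum0_split[of "\<lambda>p. (r - 1 - p) * (if nu 1 p = 0 then 0 else C (2, nu 1 p) (3,t))"] nu0 by simp
  also have "\<dots> = M t" unfolding M_def
  proof (rule sum.cong[OF refl])
    fix q assume q: "q \<in> {1..<r}"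
    then have "nu 1 q \<noteq> 0" using nu_zero_iff[of 1 q] by (auto dest: nat_dvd_not_less)
    moreover have "C (2, nu 1 q) (3,t) = Dp q div n + (if eps t < Dp q mod n then 1 else 0)"
      using F2[OF t, of "Dp q"] Dp_nz[of q] Dp_lt[of q] q nu1_Dp cnt_lt[OF eps_lt] by auto
    ultimately show "(r - 1 - q) * (if nu 1 q = 0 then 0 else C (2, nu 1 q) (3,t))
       = (r - 1 - q) * (Dp q div n + (if eps t < Dp q mod n then 1 else 0))" by simp
  qed
  finally show ?thesis unfolding W_def .
qed

lemma Xc: "t < n \<Longrightarrow> C (0,0) (3,t) = R + W (del t) + M t + W (eps t)"
proof -
  assume t: "t < n"
  have "C (0, nu 0 r) (3,t) = (\<Sum>p<r. (\<lambda>x. (if x = 0 then 0 else C (1, x) (3,t) + C (2, x) (3,t)) + (if x mod n = t then 1 else 0)) (nu 0 p))"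
    by (rule unit_orbit[where f = "\<lambda>k. C (0,k) (3,t)"]) (use f0_rec[OF t] rpos in auto)
  also have "\<dots> = (\<Sum>x<r. (if x = 0 then 0 else C (1, x) (3,t) + C (2, x) (3,t)) + (if x mod n = t then 1 else 0))"
    using sum_nu[of 0 "\<lambda>x. (if x = 0 then 0 else C (1, x) (3,t) + C (2, x) (3,t)) + (if x mod n = t then 1 else 0)"] by simp
  also have "\<dots> = (M t + W (del t) + W (eps t)) + R"
    by (simp only: sum.distrib sum_nz S2[OF t] S1[OF t] cnt_R[OF t])
  finally show ?thesis using nu_r by simp
qed


end


context main2 begin
lemma c2n: "[m 2 * m2inv = 1] (mod n)" using cong_dvd_modulus_nat[OF m2inv ndvd] .

lemma D_mod: "Dp q mod n = (q * mu) mod n"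
  unfolding Dp_def using ndvd by (simp add: mod_mod_cancel)

lemma lam_iff:
  assumes h: "h < n"
  shows "[int l = int (m 2) * int a1 * int h - 1] (mod int n) \<longleftrightarrow> Dp (l + 1) mod n = h"
proof -
  have "[int l = int (m 2) * int a1 * int h - 1] (mod int n) \<longleftrightarrow> [int (l + 1) = int (m 2 * a1 * h)] (mod int n)"
    by (simp add: cong_iff_dvd_diff algebra_simps)
  also have "\<dots> \<longleftrightarrow> [l + 1 = m 2 * a1 * h] (mod n)" by (rule cong_int_iff)
  also have "\<dots> \<longleftrightarrow> [(l + 1) * mu = h] (mod n)"
  proof
    assume c: "[l + 1 = m 2 * a1 * h] (mod n)"
    have "[(l + 1) * mu = (m 2 * a1 * h) * mu] (mod n)" by (rule cong_scalar_right[OF c])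
    also have "(m 2 * a1 * h) * mu = h * ((m 2 * m2inv) * (m 1 * a1))" unfolding mu_def by (simp add: algebra_simps)
    also have "[h * ((m 2 * m2inv) * (m 1 * a1)) = h * (1 * 1)] (mod n)"
      by (intro cong_mult cong_refl c2n a1)
    finally show "[(l + 1) * mu = h] (mod n)" by simp
  next
    assume c: "[(l + 1) * mu = h] (mod n)"
    have "[l + 1 = (l + 1) * (1 * 1)] (mod n)" by simp
    also have "[(l + 1) * (1 * 1) = (l + 1) * ((m 2 * m2inv) * (m 1 * a1))] (mod n)"
      by (intro cong_mult cong_refl cong_sym[OF c2n] cong_sym[OF a1])
    also have "(l + 1) * ((m 2 * m2inv) * (m 1 * a1)) = ((l + 1) * mu) * (m 2 * a1)"
      unfolding mu_def by (simp add: algebra_simps)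
    also have "[((l + 1) * mu) * (m 2 * a1) = h * (m 2 * a1)] (mod n)" by (rule cong_scalar_right[OF c])
    finally show "[l + 1 = m 2 * a1 * h] (mod n)" by (simp add: algebra_simps)
  qed
  also have "\<dots> \<longleftrightarrow> Dp (l + 1) mod n = h" unfolding D_mod cong_def using h by simp
  finally show ?thesis .
qed

lemma Dp_refl:
  assumes q: "1 \<le> q" "q < r"
  shows "Dp (r - q) = r - Dp q"
proof -
  have nz: "int q * int mu mod int r \<noteq> 0"
    using Dp_nz[OF q] unfolding Dp_def by (metis of_nat_0 of_nat_eq_iff of_nat_mult zmod_int)
  have "int (Dp (r - q)) = (int (r - q) * int mu) mod int r" unfolding Dp_def by (simp add: zmod_int)
  also have "\<dots> = (- (int q * int mu) + int mu * int r) mod int r"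
  proof -
    have "int (r - q) * int mu = - (int q * int mu) + int mu * int r" using q by (simp add: of_nat_diff algebra_simps)
    then show ?thesis by simp
  qed
  also have "\<dots> = (- (int q * int mu)) mod int r" by (rule mod_mult_self1)
  also have "\<dots> = int r - (int q * int mu) mod int r" using nz by (simp add: zmod_zminus1_eq_if)
  also have "\<dots> = int (r - Dp q)" using Dp_lt[of q] unfolding Dp_def by (simp add: of_nat_diff zmod_int)
  finally show ?thesis by simp
qed

lemma rho_refl:
  assumes q: "1 \<le> q" "q < r"
  shows "Dp (r - q) mod n = (if Dp q mod n = 0 then 0 else n - Dp q mod n)"
proof -
  have "int (Dp (r - q) mod n) = (int r - int (Dp q)) mod int n"
    unfolding Dp_refl[OF q] using Dp_lt[of q] by (simp add: zmod_int of_nat_diff)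
  also have "\<dots> = (- int (Dp q)) mod int n"
    using ndvd by (metis (no_types) diff_0 mod_0_imp_dvd mod_diff_left_eq of_nat_dvd_iff dvd_imp_mod_0 of_nat_0)
  also have "\<dots> = (if int (Dp q) mod int n = 0 then 0 else int n - int (Dp q) mod int n)"
    by (rule zmod_zminus1_eq_if)
  also have "\<dots> = int (if Dp q mod n = 0 then 0 else n - Dp q mod n)"
    using npos by (auto simp: zmod_int of_nat_diff)
  finally show ?thesis by simp
qed

lemma eps_s: "eps t + s_idx n a2 t = n - 1"
proof -
  define A where "A = int a2 * int t"
  have N: "0 < int n" using npos by simp
  have "int (eps t) = (- A) mod int n" unfolding eps_def A_def using N by simp
  moreover have "int (s_idx n a2 t) = (A - 1) mod int n" unfolding s_idx_def A_def using N by simp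
  moreover have "(- A) mod int n + (A - 1) mod int n = int n - 1"
  proof (cases "A mod int n = 0")
    case True
    have "(A - 1) mod int n = (A mod int n - 1) mod int n" by (simp add: mod_diff_left_eq)
    also have "\<dots> = (-1) mod int n" using True by simp
    also have "\<dots> = (-1 + int n) mod int n" by (simp only: mod_add_self2)
    also have "\<dots> = int n - 1" using N by (subst mod_pos_pos_trivial) auto
    finally show ?thesis using True by (simp add: zmod_zminus1_eq_if)
  next
    case False
    have "(A - 1) mod int n = (A mod int n - 1) mod int n" by (simp add: mod_diff_left_eq)
    also have "\<dots> = A mod int n - 1" using False N
    proof (intro mod_pos_pos_trivial)
      have "0 \<le> A mod int n" "A mod int n < int n" using N by simp_all
      then show "0 \<le> A mod int n - 1" "A mod int n - 1 < int n" using False by linarith+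
    qed
    finally show ?thesis using False by (simp add: zmod_zminus1_eq_if)
  qed
  ultimately have "int (eps t + s_idx n a2 t) = int (n - 1)" using npos by (simp add: of_nat_diff)
  then show ?thesis by simp
qed

lemma k_idx_eq:
  assumes l: "1 \<le> l" "l + 2 \<le> r"
  shows "int r * k_idx r (m 1) m2inv l = int (Dp (l + 1)) - int mu * (int l + 1)"
proof -
  define v where "v = int m2inv * int (m 1) * (int l + 1)"
  have vD: "v mod int r = int (Dp (l + 1))"
    unfolding v_def Dp_def mu_def by (simp add: zmod_int algebra_simps)
  have pos: "0 < int (Dp (l + 1))" using Dp_nz[of "l+1"] l by simp
  have lt: "int (Dp (l + 1)) < int r" using Dp_lt by simp
  define k0 where "k0 = - (v div int r)"
  have k0: "v + int r * k0 = int (Dp (l + 1))" unfolding k0_def using vD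
    by (metis add.commute minus_mult_div_eq_mod mult.commute mult_minus_right diff_minus_eq_add minus_minus)
  have "k_idx r (m 1) m2inv l = k0"
    unfolding k_idx_def v_def[symmetric]
  proof (rule the_equality)
    show "0 < v + int r * k0 \<and> v + int r * k0 < int r" using k0 pos lt by simp
  next
    fix k assume k: "0 < v + int r * k \<and> v + int r * k < int r"
    have "int r * k - int r * k0 < int r" "- int r < int r * k - int r * k0" using k k0 pos lt by linarith+
    have i1: "int r * (k - k0) < int r * 1" using \<open>int r * k - int r * k0 < int r\<close> by (simp add: algebra_simps)
    have i2: "int r * (-1) < int r * (k - k0)" using \<open>- int r < int r * k - int r * k0\<close> by (simp add: algebra_simps)
    have rp: "0 < int r" using rpos by simp
    have "k - k0 < 1" using i1 rp by (rule mult_less_cancel_left_pos[THEN iffD1, rotated])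
    moreover have "-1 < k - k0" using i2 rp by (rule mult_less_cancel_left_pos[THEN iffD1, rotated])
    ultimately show "k = k0" by simp
  qed
  then show ?thesis using k0 unfolding v_def mu_def by (simp add: algebra_simps)
qed


definition rho where "rho q = Dp q mod n"

lemma rho_lt: "rho q < n" unfolding rho_def using npos by simp

lemma lam_eq: "h < n \<Longrightarrow> Lambda r n (m 2) a1 h = {l \<in> {1..r-2}. rho (l + 1) = h}"
  unfolding Lambda_def rho_def using lam_iff by auto

lemma lam_sum:
  assumes H: "H \<subseteq> {..<n}"
  shows "(\<Sum>h\<in>H. \<Sum>l\<in>Lambda r n (m 2) a1 h. F l h) = (\<Sum>l\<in>{l \<in> {1..r-2}. rho (l + 1) \<in> H}. (F l (rho (l + 1)) :: rat))"
proof -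
  define S where "S = {l \<in> {1..r-2}. rho (l + 1) \<in> H}"
  have fH: "finite H" using H finite_subset by blast
  have "(\<Sum>h\<in>H. \<Sum>l\<in>Lambda r n (m 2) a1 h. F l h) = (\<Sum>h\<in>H. \<Sum>l\<in>{x \<in> S. rho (x + 1) = h}. F l (rho (l + 1)))"
  proof (rule sum.cong[OF refl])
    fix h assume h: "h \<in> H"
    then have "Lambda r n (m 2) a1 h = {x \<in> S. rho (x + 1) = h}" using lam_eq[of h] H unfolding S_def by auto
    then show "(\<Sum>l\<in>Lambda r n (m 2) a1 h. F l h) = (\<Sum>l\<in>{x \<in> S. rho (x + 1) = h}. F l (rho (l + 1)))"
      by (intro sum.cong) auto
  qed
  also have "\<dots> = (\<Sum>l\<in>S. F l (rho (l + 1)))"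
    by (rule sum.group) (auto simp: S_def fH)
  finally show ?thesis unfolding S_def .
qed

lemma shiftP:
  assumes "G 0 = 0"
  shows "(\<Sum>l\<in>{1..r-2}. G l) = (\<Sum>q\<in>{1..<r}. (G (q - 1) :: rat))"
proof -
  obtain r' where r': "r = Suc (Suc r')" using r2 by (metis add_2_eq_Suc le_Suc_ex)
  have "(\<Sum>q\<in>{1..<r}. G (q - 1)) = (\<Sum>q\<in>{Suc 0..<Suc (Suc r')}. G (q - 1))" using r' by simp
  also have "\<dots> = (\<Sum>i\<in>{0..<Suc r'}. G i)" by (simp only: sum.shift_bounds_Suc_ivl) simp
  also have "\<dots> = G 0 + (\<Sum>i\<in>{Suc 0..<Suc r'}. G i)" by (simp add: sum.atLeast_Suc_lessThan)
  also have "\<dots> = (\<Sum>l\<in>{1..r-2}. G l)" using assms r' by (simp add: atLeastLessThanSuc_atLeastAtMost)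
  finally show ?thesis ..
qed

lemma X_form:
  "X_val r n m m2inv a1 a2 t = (\<Sum>q\<in>{1..<r}. of_nat (q - 1) * (of_nat r - of_nat (Dp q)) / of_nat n
      + of_nat (q - 1) * of_nat (rho q) / of_nat n - (if s_idx n a2 t < rho q then of_nat (q - 1) else 0))"
proof -
  let ?L = "{1..r-2}"
  let ?s = "s_idx n a2 t"
  have nn: "(of_nat n :: rat) \<noteq> 0" using npos by simp
  have T2: "(\<Sum>l\<in>?L. of_nat l * (of_nat r * (1 - of_int (k_idx r (m 1) m2inv l)) / (of_nat n :: rat)))
     = (\<Sum>l\<in>?L. of_nat l * (of_nat r - of_nat (Dp (l + 1))) / of_nat n) + (of_nat mu / of_nat n) * (\<Sum>l\<in>?L. of_nat l * (of_nat l + 1))"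
  proof -
    have "(\<Sum>l\<in>?L. of_nat l * (of_nat r * (1 - of_int (k_idx r (m 1) m2inv l)) / (of_nat n :: rat)))
      = (\<Sum>l\<in>?L. of_nat l * (of_nat r - of_nat (Dp (l + 1))) / of_nat n + (of_nat mu / of_nat n) * (of_nat l * (of_nat l + 1)))"
    proof (rule sum.cong[OF refl])
      fix l assume l: "l \<in> ?L"
      then have "1 \<le> l" "l + 2 \<le> r" using r2 by auto
      from k_idx_eq[OF this] have "(of_int (int r * k_idx r (m 1) m2inv l) :: rat) = of_int (int (Dp (l + 1)) - int mu * (int l + 1))"
        by simp
      then have e: "(of_nat r :: rat) * of_int (k_idx r (m 1) m2inv l) = of_nat (Dp (l + 1)) - of_nat mu * (of_nat l + 1)"
        by simp
      define K where "K = k_idx r (m 1) m2inv l"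
      define Dl where "Dl = Dp (l + 1)"
      have e2: "(of_nat r :: rat) * (1 - of_int K) = of_nat r - of_nat Dl + of_nat mu * (of_nat l + 1)"
        using e unfolding K_def Dl_def by (simp add: right_diff_distrib)
      have "of_nat l * (of_nat r * (1 - of_int K) / of_nat n)
        = of_nat l * (of_nat r - of_nat Dl) / of_nat n + (of_nat mu / of_nat n) * (of_nat l * (of_nat l + (1::rat)))"
        using nn e2 by (simp add: field_simps e[folded K_def Dl_def])
      then show "of_nat l * (of_nat r * (1 - of_int (k_idx r (m 1) m2inv l)) / of_nat n)
        = of_nat l * (of_nat r - of_nat (Dp (l + 1))) / of_nat n + (of_nat mu / of_nat n) * (of_nat l * (of_nat l + (1::rat)))"
        unfolding K_def Dl_def .
    qed
    then show ?thesis by (simp add: sum.distrib sum_distrib_left)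
  qed
  have LL: "(\<Sum>l\<in>?L. of_nat l * (of_nat l + 1) :: rat) = (of_nat r - 2) * (of_nat r - 1) * of_nat r / 3"
    using sum_l_l1[of "r - 2"] r2 by (simp add: of_nat_diff)
  have T12: "- of_nat m2inv * of_nat (m 1) * of_nat r * (of_nat r - 2) * (of_nat r - 1) / (3 * of_nat n)
     + (\<Sum>l\<in>?L. of_nat l * (of_nat r * (1 - of_int (k_idx r (m 1) m2inv l)) / of_nat n))
     = (\<Sum>l\<in>?L. of_nat l * (of_nat r - of_nat (Dp (l + 1))) / (of_nat n :: rat))"
    unfolding T2 LL mu_def using nn by (simp add: field_simps)
  have T3: "(\<Sum>h\<in>{0..n-1}. \<Sum>l\<in>Lambda r n (m 2) a1 h. of_nat l * of_nat h / (of_nat n :: rat))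
     = (\<Sum>l\<in>?L. of_nat l * of_nat (rho (l + 1)) / of_nat n)"
  proof -
    have "{0..n-1} \<subseteq> {..<n}" using npos by auto
    from lam_sum[OF this, of "\<lambda>l h. of_nat l * of_nat h / of_nat n"]
    have "(\<Sum>h\<in>{0..n-1}. \<Sum>l\<in>Lambda r n (m 2) a1 h. of_nat l * of_nat h / (of_nat n :: rat))
      = (\<Sum>l\<in>{l \<in> ?L. rho (l + 1) \<in> {0..n-1}}. of_nat l * of_nat (rho (l + 1)) / of_nat n)" .
    also have "{l \<in> ?L. rho (l + 1) \<in> {0..n-1}} = ?L" using rho_lt npos by (auto simp: Suc_le_eq le_diff_conv2)
    finally show ?thesis .
  qed
  have T4: "(\<Sum>h\<in>{?s + 1..n-1}. \<Sum>l\<in>Lambda r n (m 2) a1 h. (of_nat l :: rat))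
     = (\<Sum>l\<in>?L. if ?s < rho (l + 1) then of_nat l else 0)"
  proof -
    have "{?s + 1..n-1} \<subseteq> {..<n}" using npos by auto
    from lam_sum[OF this, of "\<lambda>l h. of_nat l"]
    have "(\<Sum>h\<in>{?s + 1..n-1}. \<Sum>l\<in>Lambda r n (m 2) a1 h. (of_nat l :: rat))
      = (\<Sum>l\<in>{l \<in> ?L. rho (l + 1) \<in> {?s + 1..n-1}}. of_nat l)" .
    also have "{l \<in> ?L. rho (l + 1) \<in> {?s + 1..n-1}} = {l \<in> ?L. ?s < rho (l + 1)}"
      using rho_lt npos by (force simp: Suc_le_eq le_diff_conv2)
    also have "(\<Sum>l\<in>{l \<in> ?L. ?s < rho (l + 1)}. (of_nat l :: rat)) = (\<Sum>l\<in>?L. if ?s < rho (l + 1) then of_nat l else 0)"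
      by (rule sum.inter_filter) simp
    finally show ?thesis .
  qed
  have "X_val r n m m2inv a1 a2 t = (\<Sum>l\<in>?L. of_nat l * (of_nat r - of_nat (Dp (l + 1))) / of_nat n)
      + (\<Sum>l\<in>?L. of_nat l * of_nat (rho (l + 1)) / of_nat n) - (\<Sum>l\<in>?L. if ?s < rho (l + 1) then of_nat l else 0)"
    unfolding X_val_def T12[symmetric] T3[symmetric] T4[symmetric] by simp
  also have "\<dots> = (\<Sum>l\<in>?L. of_nat l * (of_nat r - of_nat (Dp (l + 1))) / of_nat n
      + of_nat l * of_nat (rho (l + 1)) / of_nat n - (if ?s < rho (l + 1) then of_nat l else 0))"
    by (simp add: sum.distrib sum_subtractf)
  also have "\<dots> = (\<Sum>q\<in>{1..<r}. of_nat (q - 1) * (of_nat r - of_nat (Dp (q - 1 + 1))) / of_nat n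
      + of_nat (q - 1) * of_nat (rho (q - 1 + 1)) / of_nat n - (if ?s < rho (q - 1 + 1) then of_nat (q - 1) else 0))"
    by (rule shiftP) simp
  also have "\<dots> = (\<Sum>q\<in>{1..<r}. of_nat (q - 1) * (of_nat r - of_nat (Dp q)) / of_nat n
      + of_nat (q - 1) * of_nat (rho q) / of_nat n - (if ?s < rho q then of_nat (q - 1) else 0))"
    by (rule sum.cong) auto
  finally show ?thesis .
qed


lemma cop_mu_n: "coprime mu n"
  using cop_mu ndvd by (metis coprime_mult_right_iff dvd_def)

lemma rho0_iff: "rho q = 0 \<longleftrightarrow> q mod n = 0"
proof -
  have "rho q = 0 \<longleftrightarrow> n dvd q * mu" unfolding rho_def D_mod by auto
  also have "\<dots> \<longleftrightarrow> n dvd q" using cop_mu_n by (metis coprime_commute coprime_dvd_mult_left_iff)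
  finally show ?thesis by auto
qed

lemma SD: "(\<Sum>q\<in>{1..<r}. of_nat (Dp q div n) :: rat) = of_nat n * (of_nat R * (of_nat R - 1) / 2)"
proof -
  have "(\<Sum>q\<in>{1..<r}. Dp q div n) = (\<Sum>d\<in>{1..<r}. d div n)"
    using sum.reindex[OF Dp_inj, of "\<lambda>d. d div n"] Dp_img by simp
  also have "\<dots> = (\<Sum>d<r. d div n)" using sum0_split[of "\<lambda>d. d div n"] by simp
  also have "\<dots> = n * (\<Sum>j<R. j)"
  proof -
    have e: "R * n = r" using rR by (metis mult.commute)
    from sum_div[of n R] show ?thesis unfolding e .
  qed
  finally have "(of_nat (\<Sum>q\<in>{1..<r}. Dp q div n) :: rat) = of_nat n * (\<Sum>j<R. of_nat j)" by simp
  then show ?thesis by (simp add: gauss_rat)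
qed

lemma refl_sum:
  "(\<Sum>q\<in>{1..<r}. of_nat (r - 1 - q) * E q) = (\<Sum>q\<in>{1..<r}. of_nat (q - 1) * (E (r - q) :: rat))"
  by (rule sum.reindex_bij_witness[where i = "\<lambda>q. r - q" and j = "\<lambda>q. r - q"]) auto

lemma SA: "(\<Sum>q\<in>{1..<r}. of_nat (q - 1) :: rat) = of_nat r * (of_nat r - 1) / 2 - of_nat r + 1"
proof -
  have "(\<Sum>q<r. (of_nat q - 1) :: rat) = (of_nat 0 - 1) + (\<Sum>q\<in>{1..<r}. of_nat q - 1)"
    by (rule sum0_split)
  moreover have "(\<Sum>q\<in>{1..<r}. of_nat (q - 1) :: rat) = (\<Sum>q\<in>{1..<r}. of_nat q - 1)"
    by (rule sum.cong) (auto simp: of_nat_diff)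
  moreover have "(\<Sum>q<r. (of_nat q - 1) :: rat) = of_nat r * (of_nat r - 1) / 2 - of_nat r"
    by (simp add: sum_subtractf gauss_rat)
  ultimately show ?thesis by simp
qed

lemma SN: "(\<Sum>q\<in>{1..<r}. of_nat (q - 1) * (if q mod n = 0 then 1 else 0) :: rat)
   = of_nat n * (of_nat R * (of_nat R - 1) / 2) - of_nat R + 1"
proof -
  have "(\<Sum>q<r. (if q mod n = 0 then of_nat q - 1 else 0) :: rat) = (if 0 mod n = 0 then of_nat 0 - 1 else 0) + (\<Sum>q\<in>{1..<r}. if q mod n = 0 then of_nat q - 1 else 0)"
    by (rule sum0_split)
  moreover have "(\<Sum>q\<in>{1..<r}. of_nat (q - 1) * (if q mod n = 0 then 1 else 0) :: rat) = (\<Sum>q\<in>{1..<r}. if q mod n = 0 then of_nat q - 1 else 0)"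
    by (rule sum.cong) (auto simp: of_nat_diff)
  moreover have "(\<Sum>q<r. (if q mod n = 0 then of_nat q - 1 else 0) :: rat) = (\<Sum>j<R. of_nat (0 + n * j) - 1)"
  proof -
    have "(\<Sum>q<n * R. (if q mod n = 0 then of_nat q - 1 else 0) :: rat) = (\<Sum>j<R. of_nat (0 + n * j) - 1)"
      by (rule ap_sum) (use npos in simp)
    then show ?thesis unfolding rR[symmetric] .
  qed
  moreover have "(\<Sum>j<R. of_nat (0 + n * j) - 1 :: rat) = of_nat n * (of_nat R * (of_nat R - 1) / 2) - of_nat R"
    by (simp add: sum_subtractf sum_distrib_left[symmetric] gauss_rat)
  ultimately show ?thesis by simp
qed

lemma ind_refl:
  assumes q: "1 \<le> q" "q < r"
  shows "(if eps t < rho (r - q) then 1 else 0) + (if s_idx n a2 t < rho q then 1 else 0)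
     = (1::rat) - (if q mod n = 0 then 1 else 0)"
proof -
  have es: "eps t + s_idx n a2 t = n - 1" by (rule eps_s)
  have rl: "rho q < n" by (rule rho_lt)
  have rr: "rho (r - q) = (if rho q = 0 then 0 else n - rho q)" using rho_refl[OF q] unfolding rho_def .
  show ?thesis
  proof (cases "rho q = 0")
    case True then show ?thesis using rr rho0_iff[of q] by simp
  next
    case False
    then have "q mod n \<noteq> 0" using rho0_iff by simp
    moreover have "(eps t < n - rho q) \<longleftrightarrow> \<not> (s_idx n a2 t < rho q)" using es rl False npos by linarith
    ultimately show ?thesis using rr False by auto
  qed
qed

lemma M_X: "t < n \<Longrightarrow> of_nat (M t) = X_val r n m m2inv a1 a2 t"
proof -
  assume t: "t < n"
  let ?P = "{1..<r}"
  let ?s = "s_idx n a2 t"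
  define a where "a q = (of_nat (q - 1) :: rat)" for q
  define b where "b q = (of_nat (r - 1 - q) :: rat)" for q
  define d where "d q = (of_nat (Dp q div n) :: rat)" for q
  define E where "E q = (if eps t < rho q then 1 else 0 :: rat)" for q
  define S where "S q = (if ?s < rho q then 1 else 0 :: rat)" for q
  define Z where "Z q = (if q mod n = 0 then 1 else 0 :: rat)" for q
  have nn: "(of_nat n :: rat) \<noteq> 0" using npos by simp
  have Mf: "of_nat (M t) = (\<Sum>q\<in>?P. b q * d q) + (\<Sum>q\<in>?P. a q * E (r - q))"
  proof -
    have "of_nat (M t) = (\<Sum>q\<in>?P. b q * (d q + E q))"
      unfolding M_def b_def d_def E_def rho_def by (simp only: of_nat_sum of_nat_mult of_nat_add) (rule sum.cong, auto)
    also have "\<dots> = (\<Sum>q\<in>?P. b q * d q + b q * E q)" by (simp add: distrib_left)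
    also have "\<dots> = (\<Sum>q\<in>?P. b q * d q) + (\<Sum>q\<in>?P. b q * E q)" by (rule sum.distrib)
    also have "(\<Sum>q\<in>?P. b q * E q) = (\<Sum>q\<in>?P. a q * E (r - q))"
      unfolding a_def b_def by (rule refl_sum)
    finally show ?thesis .
  qed
  have Xf: "X_val r n m m2inv a1 a2 t = (\<Sum>q\<in>?P. a q * of_nat r / of_nat n - a q * d q - a q * S q)"
  proof -
    have "X_val r n m m2inv a1 a2 t = (\<Sum>q\<in>?P. of_nat (q - 1) * (of_nat r - of_nat (Dp q)) / of_nat n
      + of_nat (q - 1) * of_nat (rho q) / of_nat n - (if ?s < rho q then of_nat (q - 1) else 0))"
      by (rule X_form)
    also have "\<dots> = (\<Sum>q\<in>?P. a q * of_nat r / of_nat n - a q * d q - a q * S q)"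
    proof (rule sum.cong[OF refl])
      fix q
      have "(of_nat (Dp q) :: rat) = of_nat n * d q + of_nat (rho q)"
        unfolding d_def rho_def by (metis div_mult_mod_eq mult.commute of_nat_add of_nat_mult)
      then show "of_nat (q - 1) * (of_nat r - of_nat (Dp q)) / of_nat n
        + of_nat (q - 1) * of_nat (rho q) / of_nat n - (if ?s < rho q then of_nat (q - 1) else 0)
        = a q * of_nat r / of_nat n - a q * d q - a q * S q"
        unfolding a_def S_def using nn by (simp add: field_simps)
    qed
    finally show ?thesis .
  qed
  have "of_nat (M t) - X_val r n m m2inv a1 a2 t
     = (of_nat r - 2) * (\<Sum>q\<in>?P. d q) - (\<Sum>q\<in>?P. a q) * of_nat r / of_nat n
        + (\<Sum>q\<in>?P. a q) - (\<Sum>q\<in>?P. a q * Z q)"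
  proof -
    have "of_nat (M t) - X_val r n m m2inv a1 a2 t =
      (\<Sum>q\<in>?P. b q * d q + a q * E (r - q) - (a q * of_nat r / of_nat n - a q * d q - a q * S q))"
      unfolding Mf Xf by (simp add: sum.distrib sum_subtractf)
    also have "\<dots> = (\<Sum>q\<in>?P. (of_nat r - 2) * d q - a q * of_nat r / of_nat n + a q - a q * Z q)"
    proof (rule sum.cong[OF refl])
      fix q assume "q \<in> ?P"
      then have q: "1 \<le> q" "q < r" by auto
      have ab: "b q + a q = of_nat r - 2" unfolding a_def b_def using q by (simp add: of_nat_diff)
      have es: "E (r - q) + S q = 1 - Z q" unfolding E_def S_def Z_def by (rule ind_refl[OF q])
      have "b q * d q + a q * E (r - q) - (a q * of_nat r / of_nat n - a q * d q - a q * S q)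
        = (b q + a q) * d q - a q * of_nat r / of_nat n + a q * (E (r - q) + S q)"
        by (simp add: algebra_simps)
      also have "\<dots> = (of_nat r - 2) * d q - a q * of_nat r / of_nat n + a q - a q * Z q"
        unfolding ab es by (simp add: algebra_simps)
      finally show "b q * d q + a q * E (r - q) - (a q * of_nat r / of_nat n - a q * d q - a q * S q)
        = (of_nat r - 2) * d q - a q * of_nat r / of_nat n + a q - a q * Z q" .
    qed
    also have "\<dots> = (of_nat r - 2) * (\<Sum>q\<in>?P. d q) - (\<Sum>q\<in>?P. a q) * of_nat r / of_nat n
        + (\<Sum>q\<in>?P. a q) - (\<Sum>q\<in>?P. a q * Z q)"
      by (simp add: sum.distrib sum_subtractf sum_distrib_left sum_distrib_right sum_divide_distrib)
    finally show ?thesis .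
  qed
  also have "\<dots> = (of_nat r - 2) * (of_nat n * (of_nat R * (of_nat R - 1) / 2))
      - (of_nat r * (of_nat r - 1) / 2 - of_nat r + 1) * of_nat r / of_nat n
      + (of_nat r * (of_nat r - 1) / 2 - of_nat r + 1)
      - (of_nat n * (of_nat R * (of_nat R - 1) / 2) - of_nat R + 1)"
    using SD SA SN unfolding a_def d_def Z_def by simp
  also have "\<dots> = 0"
  proof -
    have rRq: "(of_nat r :: rat) = of_nat n * of_nat R" using rR by (metis of_nat_mult)
    show ?thesis unfolding rRq using nn by (simp add: field_simps)
  qed
  finally show ?thesis by simp
qed


lemma rRq: "(of_nat r :: rat) = of_nat n * of_nat R" using rR by (metis of_nat_mult)

lemma eps_c: "\<exists>c::int. int (eps t) + int a2 * int t = int n * c"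
proof -
  define A where "A = int a2 * int t"
  have "int (eps t) = (- A) mod int n" unfolding eps_def A_def using npos by simp
  moreover have "(- A) mod int n = - A - int n * ((- A) div int n)" by (simp add: minus_div_mult_eq_mod[symmetric] algebra_simps)
  ultimately have "int (eps t) + A = int n * (- ((- A) div int n))" by (simp add: algebra_simps)
  then show ?thesis unfolding A_def by blast
qed

lemma del_c: "\<exists>c::int. int (del t) + int a1 * int t = int n * c"
proof -
  define A where "A = int a1 * int t"
  have "int (del t) = (- A) mod int n" unfolding del_def A_def using npos by simp
  moreover have "(- A) mod int n = - A - int n * ((- A) div int n)" by (simp add: minus_div_mult_eq_mod[symmetric] algebra_simps)
  ultimately have "int (del t) + A = int n * (- ((- A) div int n))" by (simp add: algebra_simps)
  then show ?thesis unfolding A_def by blast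
qed

lemma res_x: "t < n \<Longrightarrow> \<exists>z::int. (of_nat (C (0,0) (3,t)) :: rat) - X_val r n m m2inv a1 a2 t
            - (of_nat r / of_nat n) * (of_nat a1 * of_nat t + of_nat a2 * of_nat t - 1)
            = of_nat r * of_int z"
proof -
  assume t: "t < n"
  obtain c1 where c1: "int (del t) + int a1 * int t = int n * c1" using del_c by blast
  obtain c2 where c2: "int (eps t) + int a2 * int t = int n * c2" using eps_c by blast
  have c1q: "(of_nat (del t) :: rat) = of_nat n * of_int c1 - of_nat a1 * of_nat t"
    using arg_cong[OF c1, of "of_int :: int \<Rightarrow> rat"] by simp
  have c2q: "(of_nat (eps t) :: rat) = of_nat n * of_int c2 - of_nat a2 * of_nat t"
    using arg_cong[OF c2, of "of_int :: int \<Rightarrow> rat"] by simp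
  have nn: "(of_nat n :: rat) \<noteq> 0" using npos by simp
  have "(of_nat (C (0,0) (3,t)) :: rat) = of_nat R + of_nat (W (del t)) + of_nat (M t) + of_nat (W (eps t))"
    using Xc[OF t] by simp
  also have "\<dots> = of_nat R + (of_nat R * (of_nat r - 1 - of_nat (del t)) - of_nat n * (of_nat R * (of_nat R - 1) / 2))
     + X_val r n m m2inv a1 a2 t + (of_nat R * (of_nat r - 1 - of_nat (eps t)) - of_nat n * (of_nat R * (of_nat R - 1) / 2))"
    using W_val[OF del_lt] W_val[OF eps_lt] M_X[OF t] by simp
  finally have e: "(of_nat (C (0,0) (3,t)) :: rat) = \<dots>" .
  show ?thesis
  proof (rule exI[of _ "int R + 1 - c1 - c2"])
    show "(of_nat (C (0,0) (3,t)) :: rat) - X_val r n m m2inv a1 a2 t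
            - (of_nat r / of_nat n) * (of_nat a1 * of_nat t + of_nat a2 * of_nat t - 1)
            = of_nat r * of_int (int R + 1 - c1 - c2)"
      unfolding e c1q c2q rRq using nn by (simp add: field_simps)
  qed
qed

lemma res_y0: "(of_nat (C (1,0) (3,0)) :: rat) = of_nat r * (of_nat r + of_nat n) / (2 * of_nat n)"
proof -
  have e0: "eps 0 = 0" unfolding eps_def by simp
  have nn: "(of_nat n :: rat) \<noteq> 0" using npos by simp
  have "(of_nat (C (1,0) (3,0)) :: rat) = of_nat R + (of_nat R * (of_nat r - 1 - 0) - of_nat n * (of_nat R * (of_nat R - 1) / 2))"
    using Y[of 0] npos W_val[OF eps_lt, of 0] e0 by simp
  then show ?thesis unfolding rRq using nn by (simp add: field_simps)
qed

lemma res_y: "1 \<le> t \<Longrightarrow> t < n \<Longrightarrow> (\<exists>z::int. (of_nat (C (1,0) (3,t)) :: rat)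
            - (of_nat r * (of_nat r - of_nat n) / (2 * of_nat n)
               + of_nat a2 * of_nat t * (of_nat r / of_nat n))
            = of_nat r * of_int z)"
proof -
  assume t: "1 \<le> t" "t < n"
  obtain c2 where c2: "int (eps t) + int a2 * int t = int n * c2" using eps_c by blast
  have c2q: "(of_nat (eps t) :: rat) = of_nat n * of_int c2 - of_nat a2 * of_nat t"
    using arg_cong[OF c2, of "of_int :: int \<Rightarrow> rat"] by simp
  have nn: "(of_nat n :: rat) \<noteq> 0" using npos by simp
  have e: "(of_nat (C (1,0) (3,t)) :: rat) = of_nat R + (of_nat R * (of_nat r - 1 - of_nat (eps t)) - of_nat n * (of_nat R * (of_nat R - 1) / 2))"
    using Y[OF t(2)] W_val[OF eps_lt, of t] by simp
  show ?thesis
  proof (rule exI[of _ "1 - c2"])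
    show "(of_nat (C (1,0) (3,t)) :: rat)
            - (of_nat r * (of_nat r - of_nat n) / (2 * of_nat n)
               + of_nat a2 * of_nat t * (of_nat r / of_nat n))
            = of_nat r * of_int (1 - c2)"
      unfolding e c2q rRq using nn by (simp add: field_simps)
  qed
qed

lemma res_02: "(of_nat (C (0,0) (2,0)) :: rat) = of_nat r * (of_nat r + 1) / 2"
proof -
  have "(\<Sum>d\<in>{1..<r}. (of_nat d :: rat)) = (\<Sum>d<r. of_nat d)"
    using sum0_split[of "\<lambda>d. (of_nat d :: rat)"] by simp
  then have "(of_nat (C (0,0) (2,0)) :: rat) = of_nat r + of_nat r * (of_nat r - 1) / 2"
    using C02 gauss_rat[of r] by simp
  then show ?thesis by (simp add: field_simps)
qed

lemma res_23: "t < n \<Longrightarrow> (of_nat (C (2,0) (3,t)) :: rat) = of_nat r / of_nat n"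
  using C20[of t] rRq npos by simp

lemma all_res:
  "C (0,0) (0,0) = 1 \<and> C (0,0) (1,0) = r
     \<and> (of_nat (C (0,0) (2,0)) :: rat) = of_nat r * (of_nat r + 1) / 2
     \<and> (\<forall>t<n. \<exists>z::int. (of_nat (C (0,0) (3,t)) :: rat) - X_val r n m m2inv a1 a2 t
            - (of_nat r / of_nat n) * (of_nat a1 * of_nat t + of_nat a2 * of_nat t - 1)
            = of_nat r * of_int z)
     \<and> C (1,0) (0,0) = 0 \<and> C (1,0) (1,0) = 1 \<and> C (1,0) (2,0) = r
     \<and> (of_nat (C (1,0) (3,0)) :: rat) = of_nat r * (of_nat r + of_nat n) / (2 * of_nat n)
     \<and> (\<forall>t. 1 \<le> t \<and> t < n \<longrightarrow> (\<exists>z::int. (of_nat (C (1,0) (3,t)) :: rat)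
            - (of_nat r * (of_nat r - of_nat n) / (2 * of_nat n)
               + of_nat a2 * of_nat t * (of_nat r / of_nat n))
            = of_nat r * of_int z))
     \<and> C (2,0) (0,0) = 0 \<and> C (2,0) (1,0) = 0 \<and> C (2,0) (2,0) = 1
     \<and> (\<forall>t<n. (of_nat (C (2,0) (3,t)) :: rat) = of_nat r / of_nat n)
     \<and> (\<forall>s<n. C (3,s) (0,0) = 0 \<and> C (3,s) (1,0) = 0
             \<and> C (3,s) (2,0) = 0
             \<and> (\<forall>t<n. C (3,s) (3,t) = (if s = t then 1 else 0)))"
proof (intro conjI allI impI)
  show "C (0,0) (0,0) = 1" using C_same0[of 0 0] rpos by simp
  show "C (0,0) (1,0) = r" using C_up[of 0 r] rpos nu_r by simp
  show "C (1,0) (1,0) = 1" using C_same0[of 1 0] rpos by simp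
  show "C (1,0) (2,0) = r" using C_up[of 1 r] rpos nu_r by (simp add: numeral_2_eq_2)
  show "C (2,0) (2,0) = 1" using C_same0[of 2 0] rpos by simp
  show "C (1,0) (0,0) = 0" by (rule down) simp
  show "C (2,0) (0,0) = 0" by (rule down) simp
  show "C (2,0) (1,0) = 0" by (rule down) simp
  fix s assume s: "s < n"
  show "C (3,s) (0,0) = 0" by (rule down) simp
  show "C (3,s) (1,0) = 0" by (rule down) simp
  show "C (3,s) (2,0) = 0" by (rule down) simp
  fix t assume t: "t < n"
  have "s < r" using s npos ndvd by (meson dvd_imp_le order_less_le_trans rpos)
  then show "C (3,s) (3,t) = (if s = t then 1 else 0)" using C3[OF t] s by simp
qed (use res_02 res_x res_y0 res_y res_23 in auto)

end

theorem lemma3p5: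
  fixes r n m2inv a1 a2 :: nat and m :: "nat \<Rightarrow> nat"
  assumes "r \<ge> 2" and "n \<ge> 1"
    and "gcd (m 3) r = n" and "gcd (m 0) r = 1" and "gcd (m 1) r = 1" and "gcd (m 2) r = 1"
    and "m2inv < r" and "[m 2 * m2inv = 1] (mod r)"
    and "a1 < n" and "[m 1 * a1 = 1] (mod n)"
    and "a2 < n" and "[m 2 * a2 = 1] (mod n)"
  shows
    "L_adj 3 r m (0,0) (0,0) = 1 \<and> L_adj 3 r m (0,0) (1,0) = r
     \<and> (of_nat (L_adj 3 r m (0,0) (2,0)) :: rat) = of_nat r * (of_nat r + 1) / 2
     \<and> (\<forall>t<n. \<exists>z::int. (of_nat (L_adj 3 r m (0,0) (3,t)) :: rat) - X_val r n m m2inv a1 a2 t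
            - (of_nat r / of_nat n) * (of_nat a1 * of_nat t + of_nat a2 * of_nat t - 1)
            = of_nat r * of_int z)
     \<and> L_adj 3 r m (1,0) (0,0) = 0 \<and> L_adj 3 r m (1,0) (1,0) = 1 \<and> L_adj 3 r m (1,0) (2,0) = r
     \<and> (of_nat (L_adj 3 r m (1,0) (3,0)) :: rat) = of_nat r * (of_nat r + of_nat n) / (2 * of_nat n)
     \<and> (\<forall>t. 1 \<le> t \<and> t < n \<longrightarrow> (\<exists>z::int. (of_nat (L_adj 3 r m (1,0) (3,t)) :: rat)
            - (of_nat r * (of_nat r - of_nat n) / (2 * of_nat n)
               + of_nat a2 * of_nat t * (of_nat r / of_nat n))
            = of_nat r * of_int z))
     \<and> L_adj 3 r m (2,0) (0,0) = 0 \<and> L_adj 3 r m (2,0) (1,0) = 0 \<and> L_adj 3 r m (2,0) (2,0) = 1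
     \<and> (\<forall>t<n. (of_nat (L_adj 3 r m (2,0) (3,t)) :: rat) = of_nat r / of_nat n)
     \<and> (\<forall>s<n. L_adj 3 r m (3,s) (0,0) = 0 \<and> L_adj 3 r m (3,s) (1,0) = 0
             \<and> L_adj 3 r m (3,s) (2,0) = 0
             \<and> (\<forall>t<n. L_adj 3 r m (3,s) (3,t) = (if s = t then 1 else 0)))"
proof -
  have gu: "\<And>l. l \<le> 2 \<Longrightarrow> gcd (m l) r = 1"
  proof -
    fix l :: nat assume "l \<le> 2"
    then have "l = 0 \<or> l = 1 \<or> l = 2" by auto
    then show "gcd (m l) r = 1" using assms by auto
  qed
  interpret main2 r m n m2inv a1 a2
    by unfold_locales (use assms gu in auto)
  show ?thesis unfolding L_adj_def by (rule all_res)
qed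

end
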